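(* Let $p$ be a prime, $m\ge1$, $n\ge1$ and $0\le k<n$ integers. The number of $[[n,k]]_{p^m}$ stabilizer codes is $$N(n,k,p^m)=\left(p^{m-1}\right)^{\frac{(n-k)(n+3k+1)}{2}}\begin{bmatrix} n\\ n-k\end{bmatrix}_p\prod_{j=0}^{n-k-1}\left(p^{n-j}+1\right),\qquad \begin{bmatrix} n\\ n-k\end{bmatrix}_p:=\prod_{j=0}^{n-k-1}\frac{p^{n-j}-1}{p^{n-k-j}-1}.$$
   Context: Qudits have dimension $d=p^m$ with configuration space $\mathbb{Z}_{p^m}$ (integers modulo $p^m$, not the Galois field). $\Lambda=\begin{pmatrix}0&I_n\\-I_n&0\end{pmatrix}$. On $\mathbb{C}^d$ with basis $\{|j\rangle\}_{j\in\mathbb{Z}_d}$, $X|j\rangle=|j+1\rangle$, $Z|j\rangle=\omega^j|j\rangle$, $\omega=e^{2\pi i/d}$; the $n$-qudit Pauli group is generated by the $X_j,Z_j$ (and $e^{\pi i/d}I$ if $d$ is even); every Pauli is a phase times $g(a)=X^{u_1}Z^{v_1}\otimes\cdots\otimes X^{u_n}Z^{v_n}$, $a=(u,v)\in\mathbb{Z}_d^{2n}$, and $g(a),g(b)$ commute iff $a^T\Lambda b=0$. An $[[n,k]]_d$ stabilizer group is $S=\langle g_1,\dots,g_{n-k}\rangle$ of pairwise commuting Paulis each having eigenvalue $+1$, with $|S|=d^{n-k}$; its check matrix is $H=[a_1|\cdots|a_{n-k}]$ where $g_j$ is a phase times $g(a_j)$ (the $a_j$ are linearly independent over $\mathbb{Z}_d$,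 i.e. $\sum x_ja_j=0\Rightarrow$ all $x_j=0$). Two stabilizer groups define the same $[[n,k]]_d$ stabilizer code iff their check matrices satisfy $H'=HA$ with $A\in\mathrm{GL}(n-k,\mathbb{Z}_d)$; equivalently a code is the subgroup of $\mathbb{Z}_d^{2n}$ spanned by $n-k$ linearly independent, pairwise symplectically orthogonal ($a_i^T\Lambda a_j=0$) vectors. *)

theory Defs
  imports Complex_Main "HOL-Computational_Algebra.Primes"
begin

text \<open>Vectors of Z_d^{2n} are modelled as functions nat => int with entries in
  {0..<d} at indices < 2n (index i < n: the X-part u_(i+1); index n+i: the Z-part v_(i+1))
  and 0 elsewhere.\<close>

definition zvecs :: "nat \<Rightarrow> nat \<Rightarrow> (nat \<Rightarrow> int) set" where
  "zvecs d n = {v. (\<forall>i<2*n. 0 \<le> v i \<and> v i < int d) \<and> (\<forall>i\<ge>2*n. v i = 0)}"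

definition symp :: "nat \<Rightarrow> (nat \<Rightarrow> int) \<Rightarrow> (nat \<Rightarrow> int) \<Rightarrow> int" where
  "symp n a b = (\<Sum>i<n. a i * b (n + i) - a (n + i) * b i)"

definition lincomb :: "nat \<Rightarrow> nat \<Rightarrow> nat \<Rightarrow> (nat \<Rightarrow> nat \<Rightarrow> int) \<Rightarrow> (nat \<Rightarrow> int) \<Rightarrow> (nat \<Rightarrow> int)" where
  "lincomb d n r a x = (\<lambda>i. if i < 2*n then (\<Sum>j<r. x j * a j i) mod int d else 0)"

definition zspan :: "nat \<Rightarrow> nat \<Rightarrow> nat \<Rightarrow> (nat \<Rightarrow> nat \<Rightarrow> int) \<Rightarrow> (nat \<Rightarrow> int) set" where
  "zspan d n r a = {lincomb d n r a x | x. True}"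

definition lin_indep :: "nat \<Rightarrow> nat \<Rightarrow> nat \<Rightarrow> (nat \<Rightarrow> nat \<Rightarrow> int) \<Rightarrow> bool" where
  "lin_indep d n r a = (\<forall>x. lincomb d n r a x = (\<lambda>_. 0) \<longrightarrow> (\<forall>j<r. x j mod int d = 0))"

definition stab_codes :: "nat \<Rightarrow> nat \<Rightarrow> nat \<Rightarrow> (nat \<Rightarrow> int) set set" where
  "stab_codes d n k = {zspan d n (n - k) a | a.
      (\<forall>j<n-k. a j \<in> zvecs d n) \<and> lin_indep d n (n - k) a \<and>
      (\<forall>i<n-k. \<forall>j<n-k. symp n (a i) (a j) mod int d = 0)}"

definition gauss_binom :: "nat \<Rightarrow> nat \<Rightarrow> nat \<Rightarrow> real" where
  "gauss_binom p n k = (\<Prod>j<n-k. (real p ^ (n - j) - 1) / (real p ^ (n - k - j) - 1))"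

end

theory Submission
  imports Defs "HOL-Number_Theory.Cong"
begin


definition funs :: "nat \<Rightarrow> 'a set \<Rightarrow> 'a \<Rightarrow> (nat \<Rightarrow> 'a) set" where
  "funs s A z = {f. (\<forall>i<s. f i \<in> A) \<and> (\<forall>i\<ge>s. f i = z)}"

lemma funs_Suc: "funs (Suc s) A z = (\<lambda>(f,x). f(s:=x)) ` (funs s A z \<times> A)"
proof
  show "funs (Suc s) A z \<subseteq> (\<lambda>(f,x). f(s:=x)) ` (funs s A z \<times> A)"
  proof
    fix f assume f: "f \<in> funs (Suc s) A z"
    have "f = (\<lambda>(g,x). g(s:=x)) (f(s:=z), f s)" by auto
    moreover have "(f(s:=z), f s) \<in> funs s A z \<times> A" using f by (auto simp: funs_def)
    ultimately show "f \<in> (\<lambda>(f,x). f(s:=x)) ` (funs s A z \<times> A)" by blast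
  qed
  show "(\<lambda>(f,x). f(s:=x)) ` (funs s A z \<times> A) \<subseteq> funs (Suc s) A z"
    unfolding funs_def by (auto simp: less_Suc_eq)
qed

lemma funs_inj: "inj_on (\<lambda>(f,x). f(s:=x)) (funs s A z \<times> A)"
proof (rule inj_onI, clarify)
  fix f x g y assume "f \<in> funs s A z" "g \<in> funs s A z" "f(s := x) = g(s := y)"
  then show "f = g \<and> x = y"
  proof -
    assume a: "f \<in> funs s A z" "g \<in> funs s A z" "f(s := x) = g(s := y)"
    have "x = y" using fun_cong[OF a(3), of s] by simp
    moreover have "f i = g i" for i
    proof (cases "i = s")
      case True then show ?thesis using a(1,2) by (simp add: funs_def)
    next
      case False then show ?thesis using fun_cong[OF a(3), of i] by simp
    qed
    ultimately show ?thesis by auto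
  qed
qed

lemma funs_card: "finite A \<Longrightarrow> finite (funs s A z) \<and> card (funs s A z) = card A ^ s"
proof (induction s)
  case 0
  have "funs 0 A z = {\<lambda>_. z}" by (auto simp: funs_def)
  then show ?case by simp
next
  case (Suc s)
  then show ?case
    by (simp add: funs_Suc card_image[OF funs_inj] card_cartesian_product)
qed

definition vecs :: "int \<Rightarrow> nat \<Rightarrow> (nat \<Rightarrow> int) set" where
  "vecs q N = {v. (\<forall>i<N. 0 \<le> v i \<and> v i < q) \<and> (\<forall>i\<ge>N. v i = 0)}"

lemma vecs_funs: "vecs q N = funs N {0..<q} 0"
  by (auto simp: vecs_def funs_def)

lemma vecs_finite: "finite (vecs q N)"
  using funs_card[of "{0..<q}" N 0] by (simp add: vecs_funs)

lemma vecs_card: "card (vecs q N) = nat q ^ N"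
  using funs_card[of "{0..<q}" N 0] by (simp add: vecs_funs)

definition dot :: "nat \<Rightarrow> (nat \<Rightarrow> int) \<Rightarrow> (nat \<Rightarrow> int) \<Rightarrow> int" where
  "dot N f b = (\<Sum>l<N. f l * b l)"

definition kerv :: "int \<Rightarrow> nat \<Rightarrow> nat \<Rightarrow> (nat \<Rightarrow> nat \<Rightarrow> int) \<Rightarrow> (nat \<Rightarrow> int) set" where
  "kerv q N t F = {b \<in> vecs q N. \<forall>i<t. dot N (F i) b mod q = 0}"

definition indep :: "int \<Rightarrow> nat \<Rightarrow> nat \<Rightarrow> (nat \<Rightarrow> nat \<Rightarrow> int) \<Rightarrow> bool" where
  "indep p N s a = (\<forall>c. (\<forall>l<N. (\<Sum>i<s. c i * a i l) mod p = 0) \<longrightarrow> (\<forall>i<s. c i mod p = 0))"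

definition vmod :: "int \<Rightarrow> nat \<Rightarrow> (nat \<Rightarrow> int) \<Rightarrow> (nat \<Rightarrow> int)" where
  "vmod q N v = (\<lambda>l. if l < N then v l mod q else 0)"

lemma vmod_vecs: "q > 0 \<Longrightarrow> vmod q N v \<in> vecs q N"
  by (auto simp: vmod_def vecs_def)

lemma dot_vmod: "dot N f (vmod q N v) mod q = dot N f v mod q"
proof -
  have "(\<Sum>l<N. f l * vmod q N v l) mod q = (\<Sum>l<N. f l * v l) mod q"
  proof (rule mod_sum_eq[symmetric, THEN trans], rule trans[OF _ mod_sum_eq])
    show "(\<Sum>i<N. f i * vmod q N v i mod q) mod q = (\<Sum>i<N. f i * v i mod q) mod q"
      by (rule arg_cong[where f="\<lambda>x. x mod q"], rule sum.cong) (auto simp: vmod_def mod_mult_right_eq)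
  qed
  then show ?thesis by (simp add: dot_def)
qed

lemma dot_upd: "c < N \<Longrightarrow> dot N f (b(c := b c + x)) = dot N f b + f c * x"
proof -
  assume c: "c < N"
  have "dot N f (b(c := b c + x)) = (\<Sum>l<N. f l * b l + (if l = c then f c * x else 0))"
    unfolding dot_def by (rule sum.cong) (auto simp: algebra_simps)
  also have "\<dots> = dot N f b + f c * x" using c by (simp add: sum.distrib dot_def)
  finally show ?thesis .
qed

lemma vecs_vmod: "v \<in> vecs q N \<Longrightarrow> vmod q N v = v"
  by (auto simp: vecs_def vmod_def fun_eq_iff)


lemma dot_lin: "dot N (\<lambda>l. f l - x * g l) b = dot N f b - x * dot N g b"
  unfolding dot_def by (simp add: algebra_simps sum_subtractf sum_distrib_left)

lemma indep_nonzero: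
  assumes "prime (p::int)" "indep p N (Suc t) F"
  shows "\<exists>c<N. \<not> p dvd F t c"
proof (rule ccontr)
  assume "\<not> (\<exists>c<N. \<not> p dvd F t c)"
  then have h: "\<forall>l<N. p dvd F t l" by auto
  define cc where "cc = (\<lambda>i. if i = t then (1::int) else 0)"
  have "\<forall>l<N. (\<Sum>i<Suc t. cc i * F i l) mod p = 0"
  proof (intro allI impI)
    fix l assume "l < N"
    have "(\<Sum>i<Suc t. cc i * F i l) = F t l" by (simp add: cc_def)
    then show "(\<Sum>i<Suc t. cc i * F i l) mod p = 0" using h \<open>l < N\<close> by simp
  qed
  then have "cc t mod p = 0" using assms(2) unfolding indep_def by blast
  then have "(1::int) mod p = 0" by (simp add: cc_def)
  then show False using assms(1) by (metis dvd_eq_mod_eq_0 not_prime_unit)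
qed

lemma surj_lemma:
  assumes p: "prime (p::int)"
  shows "indep p N t F \<Longrightarrow> \<exists>b. \<forall>i<t. dot N (F i) b mod (p^e) = y i mod (p^e)"
proof (induction t arbitrary: F y)
  case 0
  then show ?case by simp
next
  case (Suc t)
  let ?q = "p^e"
  obtain c where c: "c < N" "\<not> p dvd F t c" using indep_nonzero[OF p Suc.prems] by blast
  have "coprime p (F t c)" using c(2) p by (simp add: prime_imp_coprime)
  then have "coprime (F t c) ?q" by (simp add: coprime_commute)
  then obtain u where u: "[F t c * u = 1] (mod ?q)" using cong_solve_coprime_int by blast
  then have qu: "?q dvd (F t c * u - 1)" by (simp add: cong_iff_dvd_diff)
  define G where "G = (\<lambda>i l. F i l - (F i c * u) * F t l)"
  have indG: "indep p N t G"
    unfolding indep_def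
  proof (intro allI impI)
    fix cc i assume H: "\<forall>l<N. (\<Sum>i<t. cc i * G i l) mod p = 0" and i: "i < t"
    define cc' where "cc' = cc(t := - (\<Sum>i<t. cc i * F i c) * u)"
    have "\<forall>l<N. (\<Sum>i<Suc t. cc' i * F i l) mod p = 0"
    proof (intro allI impI)
      fix l assume l: "l < N"
      have "(\<Sum>i<Suc t. cc' i * F i l) = (\<Sum>i<t. cc i * F i l) - (\<Sum>i<t. cc i * F i c) * u * F t l"
        by (simp add: cc'_def)
      also have "\<dots> = (\<Sum>i<t. cc i * G i l)"
        by (simp add: G_def algebra_simps sum_subtractf sum_distrib_left sum_distrib_right)
      finally show "(\<Sum>i<Suc t. cc' i * F i l) mod p = 0" using H l by simp
    qed
    then have "cc' i mod p = 0" using Suc.prems i unfolding indep_def by auto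
    then show "cc i mod p = 0" using i by (simp add: cc'_def)
  qed
  obtain b' where b': "\<forall>i<t. dot N (G i) b' mod ?q = (y i - F i c * u * y t) mod ?q"
    using Suc.IH[OF indG, of "\<lambda>i. y i - F i c * u * y t"] by blast
  define lam where "lam = u * (y t - dot N (F t) b')"
  define b where "b = b'(c := b' c + lam)"
  have db: "dot N f b = dot N f b' + f c * lam" for f
    unfolding b_def using dot_upd[OF c(1)] by simp
  have "dot N (F i) b mod ?q = y i mod ?q" if i: "i < Suc t" for i
  proof (cases "i = t")
    case True
    have "dot N (F t) b - y t = (F t c * u - 1) * (y t - dot N (F t) b')"
      by (simp add: db lam_def algebra_simps)
    then have "?q dvd dot N (F t) b - y t" using qu by simp
    then show ?thesis using True by (simp add: mod_eq_dvd_iff)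
  next
    case False
    then have it: "i < t" using i by simp
    have g: "dot N (G i) b' = dot N (F i) b' - F i c * u * dot N (F t) b'"
      unfolding G_def using dot_lin[of N "F i" "F i c * u" "F t" b'] by simp
    have "?q dvd dot N (G i) b' - (y i - F i c * u * y t)"
      using b' it by (simp add: mod_eq_dvd_iff)
    moreover have "dot N (F i) b - y i = dot N (G i) b' - (y i - F i c * u * y t)"
      by (simp add: db g lam_def algebra_simps)
    ultimately have "?q dvd dot N (F i) b - y i" by metis
    then show ?thesis by (simp add: mod_eq_dvd_iff)
  qed
  then show ?case by blast
qed


lemma dot_add: "dot N f (\<lambda>l. k l + w l) = dot N f k + dot N f w"
  unfolding dot_def by (simp add: algebra_simps sum.distrib)

lemma dot_trans: "dot N f (vmod q N (\<lambda>l. k l + w l)) mod q = (dot N f k + dot N f w) mod q"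
  using dot_vmod[of N f q "\<lambda>l. k l + w l"] by (simp add: dot_add)

lemma trans_bij:
  assumes q: "q > 0"
  shows "bij_betw (\<lambda>k. vmod q N (\<lambda>l. k l + w l)) {k\<in>vecs q N. P (vmod q N (\<lambda>l. k l + w l))} {b\<in>vecs q N. P b}"
proof (rule bij_betw_byWitness[where f' = "\<lambda>b. vmod q N (\<lambda>l. b l - w l)"])
  show "\<forall>a\<in>{k \<in> vecs q N. P (vmod q N (\<lambda>l. k l + w l))}. vmod q N (\<lambda>l. vmod q N (\<lambda>l. a l + w l) l - w l) = a"
  proof
    fix a assume "a \<in> {k \<in> vecs q N. P (vmod q N (\<lambda>l. k l + w l))}"
    then have a: "a \<in> vecs q N" by simp
    show "vmod q N (\<lambda>l. vmod q N (\<lambda>l. a l + w l) l - w l) = a"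
    proof
      fix l show "vmod q N (\<lambda>l. vmod q N (\<lambda>l. a l + w l) l - w l) l = a l"
        using a by (cases "l < N") (auto simp: vmod_def vecs_def mod_diff_left_eq)
    qed
  qed
  show "\<forall>a'\<in>{b \<in> vecs q N. P b}. vmod q N (\<lambda>l. vmod q N (\<lambda>l. a' l - w l) l + w l) = a'"
  proof
    fix a assume "a \<in> {b \<in> vecs q N. P b}"
    then have a: "a \<in> vecs q N" by simp
    show "vmod q N (\<lambda>l. vmod q N (\<lambda>l. a l - w l) l + w l) = a"
    proof
      fix l show "vmod q N (\<lambda>l. vmod q N (\<lambda>l. a l - w l) l + w l) l = a l"
        using a by (cases "l < N") (auto simp: vmod_def vecs_def mod_add_left_eq)
    qed
  qed
  have inv: "vmod q N (\<lambda>l. vmod q N (\<lambda>l. a l - w l) l + w l) = a" if a: "a \<in> vecs q N" for a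
  proof
    fix l show "vmod q N (\<lambda>l. vmod q N (\<lambda>l. a l - w l) l + w l) l = a l"
      using a by (cases "l < N") (auto simp: vmod_def vecs_def mod_add_left_eq)
  qed
  show "(\<lambda>k. vmod q N (\<lambda>l. k l + w l)) ` {k \<in> vecs q N. P (vmod q N (\<lambda>l. k l + w l))} \<subseteq> {b \<in> vecs q N. P b}"
    using vmod_vecs[OF q] by auto
  show "(\<lambda>b. vmod q N (\<lambda>l. b l - w l)) ` {b \<in> vecs q N. P b} \<subseteq> {k \<in> vecs q N. P (vmod q N (\<lambda>l. k l + w l))}"
    using vmod_vecs[OF q] inv by auto
qed

lemma trans_card:
  assumes q: "q > 0"
  shows "card {b\<in>vecs q N. P b} = card {k\<in>vecs q N. P (vmod q N (\<lambda>l. k l + w l))}"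
  using bij_betw_same_card[OF trans_bij[OF q, of N w P]] by simp

lemma fiber_card:
  assumes p: "prime (p::int)" and ind: "indep p N t F" and y: "y \<in> vecs (p^e) t"
  shows "card {b\<in>vecs (p^e) N. \<forall>i<t. dot N (F i) b mod (p^e) = y i} = card (kerv (p^e) N t F)"
proof -
  let ?q = "p^e"
  have q: "?q > 0" using p by (simp add: prime_gt_0_int)
  obtain b0 where b0: "\<forall>i<t. dot N (F i) b0 mod ?q = y i mod ?q" using surj_lemma[OF p ind] by blast
  define w where "w = vmod ?q N b0"
  have w: "dot N (F i) w mod ?q = y i" if "i < t" for i
    using b0 that y dot_vmod[of N "F i" ?q b0] by (auto simp: w_def vecs_def)
  have "card {b\<in>vecs ?q N. \<forall>i<t. dot N (F i) b mod ?q = y i}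
      = card {k\<in>vecs ?q N. \<forall>i<t. dot N (F i) (vmod ?q N (\<lambda>l. k l + w l)) mod ?q = y i}"
    by (rule trans_card[OF q])
  also have "{k\<in>vecs ?q N. \<forall>i<t. dot N (F i) (vmod ?q N (\<lambda>l. k l + w l)) mod ?q = y i} = kerv ?q N t F"
  proof -
    have "dot N (F i) (vmod ?q N (\<lambda>l. k l + w l)) mod ?q = y i \<longleftrightarrow> dot N (F i) k mod ?q = 0"
      if "i < t" for i k
    proof -
      have "dot N (F i) (vmod ?q N (\<lambda>l. k l + w l)) mod ?q = (dot N (F i) k + dot N (F i) w mod ?q) mod ?q"
        by (simp add: dot_trans mod_add_right_eq)
      also have "\<dots> = (dot N (F i) k + y i) mod ?q" using w[OF that] by simp
      finally have e: "dot N (F i) (vmod ?q N (\<lambda>l. k l + w l)) mod ?q = (dot N (F i) k + y i) mod ?q" .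
      have yy: "y i mod ?q = y i" using y that by (simp add: vecs_def)
      show ?thesis unfolding e
        by (metis yy add.commute add.right_neutral mod_add_right_eq mod_add_cong mod_mod_trivial
            add_diff_cancel_left' mod_diff_right_eq diff_zero mod_0)
    qed
    then show ?thesis unfolding kerv_def by auto
  qed
  finally show ?thesis .
qed

lemma ker_card:
  assumes p: "prime (p::int)" and ind: "indep p N t F"
  shows "card (kerv (p^e) N t F) * (nat (p^e))^t = (nat (p^e))^N"
proof -
  let ?q = "p^e"
  have q: "?q > 0" using p by (simp add: prime_gt_0_int)
  define fib where "fib = (\<lambda>y. {b\<in>vecs ?q N. \<forall>i<t. dot N (F i) b mod ?q = y i})"
  have "vecs ?q N = (\<Union>y\<in>vecs ?q t. fib y)"
  proof
    show "vecs ?q N \<subseteq> (\<Union>y\<in>vecs ?q t. fib y)"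
    proof
      fix b assume b: "b \<in> vecs ?q N"
      have "vmod ?q t (\<lambda>i. dot N (F i) b) \<in> vecs ?q t" by (rule vmod_vecs[OF q])
      moreover have "b \<in> fib (vmod ?q t (\<lambda>i. dot N (F i) b))" using b by (simp add: fib_def vmod_def)
      ultimately show "b \<in> (\<Union>y\<in>vecs ?q t. fib y)" by blast
    qed
    show "(\<Union>y\<in>vecs ?q t. fib y) \<subseteq> vecs ?q N" by (auto simp: fib_def)
  qed
  then have "card (vecs ?q N) = card (\<Union>y\<in>vecs ?q t. fib y)" by simp
  also have "\<dots> = (\<Sum>y\<in>vecs ?q t. card (fib y))"
  proof (rule card_UN_disjoint)
    show "finite (vecs ?q t)" by (rule vecs_finite)
    show "\<forall>y\<in>vecs ?q t. finite (fib y)" using vecs_finite by (auto simp: fib_def)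
    show "\<forall>y\<in>vecs ?q t. \<forall>y'\<in>vecs ?q t. y \<noteq> y' \<longrightarrow> fib y \<inter> fib y' = {}"
    proof (intro ballI impI)
      fix y y' assume y: "y \<in> vecs ?q t" and y': "y' \<in> vecs ?q t" and ne: "y \<noteq> y'"
      show "fib y \<inter> fib y' = {}"
      proof (rule ccontr)
        assume "fib y \<inter> fib y' \<noteq> {}"
        then obtain b where "b \<in> fib y" "b \<in> fib y'" by blast
        then have "\<forall>i<t. y i = y' i" by (auto simp: fib_def)
        then have "y = y'" using y y' unfolding vecs_def fun_eq_iff
          by (metis (mono_tags, lifting) mem_Collect_eq not_le)
        then show False using ne by simp
      qed
    qed
  qed
  also have "\<dots> = (\<Sum>y\<in>vecs ?q t. card (kerv ?q N t F))"
    by (rule sum.cong) (auto simp: fib_def fiber_card[OF p ind])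
  also have "\<dots> = card (vecs ?q t) * card (kerv ?q N t F)" by simp
  finally show ?thesis by (simp add: vecs_card mult.commute)
qed


lemma sum_upd_Suc: "(\<Sum>i<Suc s. c i * (a(s:=b)) i l) = (\<Sum>i<s. c i * a i l) + c s * b l"
  by simp

lemma ext_char:
  assumes p: "prime (p::int)" and ind: "indep p N s a"
  shows "indep p N (Suc s) (a(s:=b)) \<longleftrightarrow> \<not> (\<exists>c. \<forall>l<N. (b l - (\<Sum>i<s. c i * a i l)) mod p = 0)"
proof
  assume I: "indep p N (Suc s) (a(s:=b))"
  show "\<not> (\<exists>c. \<forall>l<N. (b l - (\<Sum>i<s. c i * a i l)) mod p = 0)"
  proof
    assume "\<exists>c. \<forall>l<N. (b l - (\<Sum>i<s. c i * a i l)) mod p = 0"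
    then obtain c where c: "\<forall>l<N. (b l - (\<Sum>i<s. c i * a i l)) mod p = 0" by blast
    define c' where "c' = (\<lambda>i. - c i)(s := 1)"
    have "\<forall>l<N. (\<Sum>i<Suc s. c' i * (a(s:=b)) i l) mod p = 0"
    proof (intro allI impI)
      fix l assume l: "l < N"
      have "(\<Sum>i<Suc s. c' i * (a(s:=b)) i l) = b l - (\<Sum>i<s. c i * a i l)"
        by (simp add: c'_def sum_negf)
      then show "(\<Sum>i<Suc s. c' i * (a(s:=b)) i l) mod p = 0" using c l by simp
    qed
    then have "c' s mod p = 0" using I unfolding indep_def by blast
    then have "(1::int) mod p = 0" by (simp add: c'_def)
    then show False using p by (metis dvd_eq_mod_eq_0 not_prime_unit)
  qed
next
  assume nb: "\<not> (\<exists>c. \<forall>l<N. (b l - (\<Sum>i<s. c i * a i l)) mod p = 0)"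
  show "indep p N (Suc s) (a(s:=b))"
    unfolding indep_def
  proof (intro allI impI)
    fix c i assume H: "\<forall>l<N. (\<Sum>i<Suc s. c i * (a(s:=b)) i l) mod p = 0" and i: "i < Suc s"
    have H': "p dvd (\<Sum>i<s. c i * a i l) + c s * b l" if "l < N" for l
      using H that by (simp add: dvd_eq_mod_eq_0)
    show "c i mod p = 0"
    proof (cases "p dvd c s")
      case True
      have "\<forall>l<N. (\<Sum>i<s. c i * a i l) mod p = 0"
      proof (intro allI impI)
        fix l assume l: "l < N"
        have "p dvd c s * b l" using True by simp
        then have "p dvd (\<Sum>i<s. c i * a i l)" using H'[OF l]
          by (metis dvd_add_left_iff)
        then show "(\<Sum>i<s. c i * a i l) mod p = 0" by simp
      qed
      then have "\<forall>i<s. c i mod p = 0" using ind unfolding indep_def by blast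
      then show ?thesis using i True by (cases "i = s") auto
    next
      case False
      have "coprime p (c s)" using False p by (simp add: prime_imp_coprime)
      then have "coprime (c s) p" by (simp add: coprime_commute)
      then obtain u where u: "[c s * u = 1] (mod p)" using cong_solve_coprime_int by blast
      then have pu: "p dvd c s * u - 1" by (simp add: cong_iff_dvd_diff)
      have "\<forall>l<N. (b l - (\<Sum>i<s. (- u * c i) * a i l)) mod p = 0"
      proof (intro allI impI)
        fix l assume l: "l < N"
        have e: "b l - (\<Sum>i<s. (- u * c i) * a i l) = u * ((\<Sum>i<s. c i * a i l) + c s * b l) - (c s * u - 1) * b l"
          by (simp add: algebra_simps sum_distrib_left sum_negf)
        have "p dvd u * ((\<Sum>i<s. c i * a i l) + c s * b l) - (c s * u - 1) * b l"
          using H'[OF l] pu by (simp add: dvd_diff)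
        then show "(b l - (\<Sum>i<s. (- u * c i) * a i l)) mod p = 0" unfolding e by simp
      qed
      then have "\<exists>cc. \<forall>l<N. (b l - (\<Sum>i<s. cc i * a i l)) mod p = 0"
        by (rule exI[where x="\<lambda>i. - u * c i"])
      with nb show ?thesis by simp
    qed
  qed
qed


lemma dot_lincomb: "dot N f (\<lambda>l. \<Sum>j<s. c j * a j l) = (\<Sum>j<s. c j * dot N f (a j))"
  unfolding dot_def by (simp add: sum_distrib_left sum.swap[of _ "{..<N}"] algebra_simps)

lemma B_zero_card:
  assumes p: "prime (p::int)"
  shows "card {b \<in> vecs (p^Suc m') N. (\<forall>i<t. dot N (F i) b mod (p^Suc m') = 0) \<and> (\<forall>l<N. b l mod p = 0)}
         = card (kerv (p^m') N t F)"
proof -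
  let ?q = "p^Suc m'" and ?r = "p^m'"
  have p0: "p > 1" using p by (simp add: prime_gt_1_int)
  have r0: "?r > 0" using p0 by simp
  have img: "{b \<in> vecs ?q N. (\<forall>i<t. dot N (F i) b mod ?q = 0) \<and> (\<forall>l<N. b l mod p = 0)}
        = (\<lambda>w l. p * w l) ` kerv ?r N t F"
  proof
    show "(\<lambda>w l. p * w l) ` kerv ?r N t F \<subseteq> {b \<in> vecs ?q N. (\<forall>i<t. dot N (F i) b mod ?q = 0) \<and> (\<forall>l<N. b l mod p = 0)}"
    proof
      fix b assume "b \<in> (\<lambda>w l. p * w l) ` kerv ?r N t F"
      then obtain w where w: "w \<in> kerv ?r N t F" and b: "b = (\<lambda>l. p * w l)" by blast
      have "b \<in> vecs ?q N"
      proof -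
        have "p * w l < ?q" if "l < N" for l
        proof -
          have "w l < ?r" using w that by (auto simp: kerv_def vecs_def)
          then show ?thesis using p0 by simp
        qed
        then show ?thesis using w p0 by (auto simp: b kerv_def vecs_def)
      qed
      moreover have "dot N (F i) b mod ?q = 0" if "i < t" for i
      proof -
        have "dot N (F i) b = p * dot N (F i) w" by (simp add: b dot_def sum_distrib_left algebra_simps)
        then have "dot N (F i) b mod ?q = p * (dot N (F i) w mod ?r)" by (simp add: mod_mult_mult1)
        then show ?thesis using w that by (simp add: kerv_def)
      qed
      ultimately show "b \<in> {b \<in> vecs ?q N. (\<forall>i<t. dot N (F i) b mod ?q = 0) \<and> (\<forall>l<N. b l mod p = 0)}"
        by (simp add: b)
    qed
    show "{b \<in> vecs ?q N. (\<forall>i<t. dot N (F i) b mod ?q = 0) \<and> (\<forall>l<N. b l mod p = 0)} \<subseteq> (\<lambda>w l. p * w l) ` kerv ?r N t F"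
    proof
      fix b assume b: "b \<in> {b \<in> vecs ?q N. (\<forall>i<t. dot N (F i) b mod ?q = 0) \<and> (\<forall>l<N. b l mod p = 0)}"
      define w where "w = (\<lambda>l. b l div p)"
      have bw: "b = (\<lambda>l. p * w l)"
      proof
        fix l show "b l = p * w l"
        proof (cases "l < N")
          case True
          then have "b l mod p = 0" using b by auto
          then show ?thesis unfolding w_def by (metis add.right_neutral mult_div_mod_eq)
        next
          case False then show ?thesis using b by (simp add: w_def vecs_def)
        qed
      qed
      have "w \<in> vecs ?r N"
      proof -
        have "w l < ?r" if "l < N" for l
        proof -
          have "p * w l < p * ?r" using b that bw by (simp add: vecs_def)
          then show ?thesis using p0 by simp
        qed
        moreover have "0 \<le> w l" if "l < N" for l
        proof -
          have "0 \<le> b l" using b that by (simp add: vecs_def)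
          then show ?thesis using p0 by (simp add: w_def pos_imp_zdiv_nonneg_iff)
        qed
        moreover have "w l = 0" if "l \<ge> N" for l using b that by (simp add: w_def vecs_def)
        ultimately show ?thesis by (simp add: vecs_def)
      qed
      moreover have "dot N (F i) w mod ?r = 0" if "i < t" for i
      proof -
        have "dot N (F i) b = p * dot N (F i) w" by (simp add: bw dot_def sum_distrib_left algebra_simps)
        then have "dot N (F i) b mod ?q = p * (dot N (F i) w mod ?r)" by (simp add: mod_mult_mult1)
        then show ?thesis using b that p0 by simp
      qed
      ultimately show "b \<in> (\<lambda>w l. p * w l) ` kerv ?r N t F" using bw by (auto simp: kerv_def)
    qed
  qed
  have "inj_on (\<lambda>w l. p * w l) (kerv ?r N t F)"
  proof (rule inj_onI)
    fix x y assume "(\<lambda>l. p * x l) = (\<lambda>l. p * y l)"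
    then show "x = y" using p0 by (auto simp: fun_eq_iff)
  qed
  then show ?thesis unfolding img by (rule card_image)
qed

lemma B_card:
  assumes p: "prime (p::int)" and m: "m > 0" and aK: "\<forall>i<s. a i \<in> kerv (p^m) N t F"
  shows "card {b \<in> vecs (p^m) N. (\<forall>i<t. dot N (F i) b mod (p^m) = 0) \<and> (\<forall>l<N. (b l - (\<Sum>j<s. c j * a j l)) mod p = 0)}
    = card {b \<in> vecs (p^m) N. (\<forall>i<t. dot N (F i) b mod (p^m) = 0) \<and> (\<forall>l<N. b l mod p = 0)}"
proof -
  let ?q = "p^m"
  define S where "S = (\<lambda>l. \<Sum>j<s. c j * a j l)"
  define w where "w = vmod ?q N S"
  have q: "?q > 0" using p by (simp add: prime_gt_0_int)
  have pq: "p dvd ?q" if "m > 0" using that by simp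
  have dw: "dot N (F i) w mod ?q = 0" if "i < t" for i
  proof -
    have "dot N (F i) w mod ?q = dot N (F i) S mod ?q" by (simp add: w_def dot_vmod)
    also have "dot N (F i) S = (\<Sum>j<s. c j * dot N (F i) (a j))" unfolding S_def by (rule dot_lincomb)
    also have "(\<Sum>j<s. c j * dot N (F i) (a j)) mod ?q = 0"
    proof -
      have "?q dvd (\<Sum>j<s. c j * dot N (F i) (a j))"
      proof (rule dvd_sum)
        fix j assume "j \<in> {..<s}"
        then have "dot N (F i) (a j) mod ?q = 0" using aK that by (simp add: kerv_def)
        then show "?q dvd c j * dot N (F i) (a j)" by (simp add: dvd_eq_mod_eq_0[symmetric])
      qed
      then show ?thesis by simp
    qed
    finally show ?thesis .
  qed
  have "card {b \<in> vecs ?q N. (\<forall>i<t. dot N (F i) b mod ?q = 0) \<and> (\<forall>l<N. (b l - S l) mod p = 0)}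
     = card {k \<in> vecs ?q N. (\<forall>i<t. dot N (F i) (vmod ?q N (\<lambda>l. k l + w l)) mod ?q = 0) \<and>
                (\<forall>l<N. (vmod ?q N (\<lambda>l. k l + w l) l - S l) mod p = 0)}"
    by (rule trans_card[OF q])
  also have "{k \<in> vecs ?q N. (\<forall>i<t. dot N (F i) (vmod ?q N (\<lambda>l. k l + w l)) mod ?q = 0) \<and>
                (\<forall>l<N. (vmod ?q N (\<lambda>l. k l + w l) l - S l) mod p = 0)}
     = {b \<in> vecs ?q N. (\<forall>i<t. dot N (F i) b mod ?q = 0) \<and> (\<forall>l<N. b l mod p = 0)}"
  proof -
    have A: "dot N (F i) (vmod ?q N (\<lambda>l. k l + w l)) mod ?q = dot N (F i) k mod ?q" if "i < t" for i k
    proof -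
      have "dot N (F i) (vmod ?q N (\<lambda>l. k l + w l)) mod ?q = (dot N (F i) k + dot N (F i) w mod ?q) mod ?q"
        by (simp add: dot_trans mod_add_right_eq)
      then show ?thesis using dw[OF that] by simp
    qed
    have B: "(vmod ?q N (\<lambda>l. k l + w l) l - S l) mod p = k l mod p" if "l < N" for k l
    proof -
      have "?q dvd (vmod ?q N (\<lambda>l. k l + w l) l - S l) - k l"
      proof -
        have e: "(vmod ?q N (\<lambda>l. k l + w l) l - S l) - k l
            = ((k l + w l) mod ?q - (k l + w l)) + (S l mod ?q - S l)"
          using that by (simp add: vmod_def w_def)
        show ?thesis unfolding e by (intro dvd_add) (simp_all add: mod_eq_dvd_iff[symmetric] mod_diff_left_eq[symmetric])
      qed
      then have "p dvd (vmod ?q N (\<lambda>l. k l + w l) l - S l) - k l"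
        using pq[OF m] dvd_trans by blast
      then show ?thesis by (simp add: mod_eq_dvd_iff)
    qed
    show ?thesis using A B by auto
  qed
  finally show ?thesis unfolding S_def .
qed

lemma ext_count:
  assumes p: "prime (p::int)" and m: "m > 0"
    and aK: "\<forall>i<s. a i \<in> kerv (p^m) N t F" and ind: "indep p N s a"
  shows "card {b \<in> kerv (p^m) N t F. indep p N (Suc s) (a(s:=b))} + nat p ^ s * card (kerv (p^(m-1)) N t F)
     = card (kerv (p^m) N t F)"
proof -
  let ?q = "p^m"
  obtain m' where m': "m = Suc m'" using m by (cases m) auto
  define S where "S = (\<lambda>c l. \<Sum>j<s. c j * a j l)"
  define B where "B = (\<lambda>c. {b \<in> vecs ?q N. (\<forall>i<t. dot N (F i) b mod ?q = 0) \<and> (\<forall>l<N. (b l - S c l) mod p = 0)})"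
  define Ext where "Ext = {b \<in> kerv ?q N t F. indep p N (Suc s) (a(s:=b))}"
  define Bad where "Bad = {b \<in> kerv ?q N t F. \<exists>c. \<forall>l<N. (b l - S c l) mod p = 0}"
  have fk: "finite (kerv ?q N t F)" using vecs_finite[of ?q N] by (simp add: kerv_def)
  have ec: "b \<in> Ext \<longleftrightarrow> b \<in> kerv ?q N t F \<and> b \<notin> Bad" for b
    unfolding Ext_def Bad_def S_def mem_Collect_eq using ext_char[OF p ind, of b] by (simp only:) blast
  have "kerv ?q N t F = Ext \<union> Bad" "Ext \<inter> Bad = {}"
    using ec by (auto simp: Bad_def)
  then have c1: "card (kerv ?q N t F) = card Ext + card Bad"
    using fk by (metis card_Un_disjoint finite_Un)
  have Bad_U: "Bad = (\<Union>c\<in>vecs p s. B c)"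
  proof
    show "Bad \<subseteq> (\<Union>c\<in>vecs p s. B c)"
    proof
      fix b assume "b \<in> Bad"
      then obtain c where b: "b \<in> kerv ?q N t F" and c: "\<forall>l<N. (b l - S c l) mod p = 0"
        by (auto simp: Bad_def)
      define c' where "c' = vmod p s c"
      have "c' \<in> vecs p s" using p by (simp add: c'_def vmod_vecs prime_gt_0_int)
      moreover have "(b l - S c' l) mod p = 0" if "l < N" for l
      proof -
        have "(S c' l) mod p = S c l mod p"
          unfolding S_def c'_def vmod_def
          by (rule trans[OF mod_sum_eq[symmetric]], rule trans[OF _ mod_sum_eq])
             (rule arg_cong[where f="\<lambda>x. x mod p"], rule sum.cong, auto simp: mod_mult_left_eq)
        then show ?thesis using c that by (metis mod_diff_right_eq)
      qed
      ultimately show "b \<in> (\<Union>c\<in>vecs p s. B c)" using b by (auto simp: B_def kerv_def)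
    qed
    show "(\<Union>c\<in>vecs p s. B c) \<subseteq> Bad" by (auto simp: B_def Bad_def kerv_def)
  qed
  have c2: "card Bad = (\<Sum>c\<in>vecs p s. card (B c))"
    unfolding Bad_U
  proof (rule card_UN_disjoint)
    show "finite (vecs p s)" by (rule vecs_finite)
    show "\<forall>c\<in>vecs p s. finite (B c)" using vecs_finite by (auto simp: B_def)
    show "\<forall>c\<in>vecs p s. \<forall>c'\<in>vecs p s. c \<noteq> c' \<longrightarrow> B c \<inter> B c' = {}"
    proof (intro ballI impI)
      fix c c' assume c: "c \<in> vecs p s" and c': "c' \<in> vecs p s" and ne: "c \<noteq> c'"
      show "B c \<inter> B c' = {}"
      proof (rule ccontr)
        assume "B c \<inter> B c' \<noteq> {}"
        then obtain b where b1: "b \<in> B c" and b2: "b \<in> B c'" by blast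
        have "\<forall>l<N. (\<Sum>i<s. (c i - c' i) * a i l) mod p = 0"
        proof (intro allI impI)
          fix l assume l: "l < N"
          have "p dvd b l - S c l" "p dvd b l - S c' l" using b1 b2 l by (auto simp: B_def)
          then have "p dvd (b l - S c' l) - (b l - S c l)" by (rule dvd_diff[rotated])
          moreover have "(b l - S c' l) - (b l - S c l) = (\<Sum>i<s. (c i - c' i) * a i l)"
            by (simp add: S_def algebra_simps sum_subtractf)
          ultimately show "(\<Sum>i<s. (c i - c' i) * a i l) mod p = 0" by simp
        qed
        then have h: "\<forall>i<s. (c i - c' i) mod p = 0" using ind unfolding indep_def
          by (drule_tac spec[where x="\<lambda>i. c i - c' i"]) simp
        have "c = c'"
        proof
          fix i show "c i = c' i"
          proof (cases "i < s")
            case True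
            then have "c i mod p = c' i mod p" using h by (simp add: mod_eq_dvd_iff dvd_eq_mod_eq_0)
            moreover have "c i mod p = c i" "c' i mod p = c' i" using c c' True by (auto simp: vecs_def)
            ultimately show ?thesis by simp
          next
            case False then show ?thesis using c c' by (simp add: vecs_def)
          qed
        qed
        then show False using ne by simp
      qed
    qed
  qed
  have c3: "card (B c) = card (kerv (p^(m-1)) N t F)" for c
  proof -
    have "card (B c) = card {b \<in> vecs ?q N. (\<forall>i<t. dot N (F i) b mod ?q = 0) \<and> (\<forall>l<N. b l mod p = 0)}"
      unfolding B_def S_def by (rule B_card[OF p m aK])
    also have "\<dots> = card (kerv (p^(m-1)) N t F)" unfolding m' using B_zero_card[OF p] by simp
    finally show ?thesis .
  qed
  have "card Bad = nat p ^ s * card (kerv (p^(m-1)) N t F)"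
    unfolding c2 c3 by (simp add: vecs_card)
  then show ?thesis using c1 by (simp add: Ext_def)
qed


lemma indep_pow:
  assumes p: "prime (p::int)" and m: "m > 0"
  shows "indep (p^m) N r a \<longleftrightarrow> indep p N r a"
proof
  assume I: "indep (p^m) N r a"
  show "indep p N r a" unfolding indep_def
  proof (intro allI impI)
    fix c i assume H: "\<forall>l<N. (\<Sum>i<r. c i * a i l) mod p = 0" and i: "i < r"
    define c' where "c' = (\<lambda>i. p^(m-1) * c i)"
    have pm: "p^m = p^(m-1) * p" using m by (simp add: power_eq_if)
    have "\<forall>l<N. (\<Sum>i<r. c' i * a i l) mod (p^m) = 0"
    proof (intro allI impI)
      fix l assume l: "l < N"
      have "(\<Sum>i<r. c' i * a i l) = p^(m-1) * (\<Sum>i<r. c i * a i l)"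
        by (simp add: c'_def sum_distrib_left algebra_simps)
      moreover have "p dvd (\<Sum>i<r. c i * a i l)" using H l by (simp add: dvd_eq_mod_eq_0)
      ultimately have "p^m dvd (\<Sum>i<r. c' i * a i l)" unfolding pm by (simp add: mult_dvd_mono)
      then show "(\<Sum>i<r. c' i * a i l) mod (p^m) = 0" by simp
    qed
    then have "c' i mod (p^m) = 0" using I i unfolding indep_def by blast
    then have "p^(m-1) * p dvd p^(m-1) * c i" unfolding pm c'_def by (simp add: dvd_eq_mod_eq_0)
    then have "p dvd c i" using p by (simp add: prime_gt_0_int)
    then show "c i mod p = 0" by simp
  qed
next
  assume I: "indep p N r a"
  show "indep (p^m) N r a" unfolding indep_def
  proof (intro allI impI)
    fix c i assume H: "\<forall>l<N. (\<Sum>i<r. c i * a i l) mod (p^m) = 0" and ir: "i < r"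
    have "e \<le> m \<Longrightarrow> \<forall>i<r. p^e dvd c i" for e
    proof (induction e)
      case 0 then show ?case by simp
    next
      case (Suc e)
      then have IH: "\<forall>i<r. p^e dvd c i" and em: "e < m" by auto
      define y where "y = (\<lambda>i. c i div p^e)"
      have cy: "c i = p^e * y i" if "i < r" for i using IH that by (simp add: y_def)
      have "\<forall>l<N. (\<Sum>i<r. y i * a i l) mod p = 0"
      proof (intro allI impI)
        fix l assume l: "l < N"
        have "(\<Sum>i<r. c i * a i l) = p^e * (\<Sum>i<r. y i * a i l)"
          by (simp add: cy sum_distrib_left algebra_simps)
        moreover have "p^m dvd (\<Sum>i<r. c i * a i l)" using H l by (simp add: dvd_eq_mod_eq_0)
        moreover have "p^m = p^e * p^(m-e)" using em by (simp add: power_add[symmetric])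
        ultimately have "p^e * p^(m-e) dvd p^e * (\<Sum>i<r. y i * a i l)" by simp
        then have "p^(m-e) dvd (\<Sum>i<r. y i * a i l)" using p by (simp add: prime_gt_0_int)
        moreover have "p dvd p^(m-e)" using em by simp
        ultimately have "p dvd (\<Sum>i<r. y i * a i l)" by (meson dvd_trans)
        then show "(\<Sum>i<r. y i * a i l) mod p = 0" by simp
      qed
      then have "\<forall>i<r. y i mod p = 0" using I unfolding indep_def by blast
      then show ?case using cy by (simp add: dvd_eq_mod_eq_0[symmetric] mult_dvd_mono)
    qed
    then have "\<forall>i<r. p^m dvd c i" by simp
    then show "c i mod (p^m) = 0" using ir by simp
  qed
qed

lemma lin_indep_eq: "lin_indep d n r a = indep (int d) (2*n) r a"
proof -
  have "lincomb d n r a x = (\<lambda>_. 0) \<longleftrightarrow> (\<forall>l<2*n. (\<Sum>j<r. x j * a j l) mod int d = 0)" for x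
    unfolding lincomb_def fun_eq_iff by auto
  then show ?thesis unfolding lin_indep_def indep_def by simp
qed


definition Jv :: "nat \<Rightarrow> (nat \<Rightarrow> int) \<Rightarrow> (nat \<Rightarrow> int)" where
  "Jv n u = (\<lambda>l. if l < n then - u (n + l) else if l < 2*n then u (l - n) else 0)"

lemma sum_split_add: "(\<Sum>i<a+b. f i) = (\<Sum>i<a. f i) + (\<Sum>i<(b::nat). f (a + i))"
  by (induction b) (simp_all add: add_ac)

lemma symp_dot: "symp n u b = dot (2*n) (Jv n u) b"
proof -
  have "dot (2*n) (Jv n u) b = (\<Sum>l<n. Jv n u l * b l) + (\<Sum>i<n. Jv n u (n+i) * b (n+i))"
    unfolding dot_def mult_2 by (rule sum_split_add)
  also have "\<dots> = (\<Sum>l<n. - u (n + l) * b l) + (\<Sum>i<n. u i * b (n+i))"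
    by (simp add: Jv_def)
  also have "\<dots> = symp n u b"
    by (simp add: symp_def sum_subtractf sum_negf)
  finally show ?thesis by simp
qed

lemma symp_antisym: "symp n b a = - symp n a b"
  unfolding symp_def by (simp add: sum_negf[symmetric] algebra_simps)

lemma symp_self: "symp n a a = 0"
  using symp_antisym[of n a a] by simp

lemma indep_Jv:
  assumes "indep p (2*n) s a"
  shows "indep p (2*n) s (\<lambda>i. Jv n (a i))"
  unfolding indep_def
proof (intro allI impI)
  fix c i assume H: "\<forall>l<2*n. (\<Sum>i<s. c i * Jv n (a i) l) mod p = 0" and i: "i < s"
  have "\<forall>l<2*n. (\<Sum>i<s. c i * a i l) mod p = 0"
  proof (intro allI impI)
    fix l assume l: "l < 2*n"
    show "(\<Sum>i<s. c i * a i l) mod p = 0"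
    proof (cases "l < n")
      case True
      have "(\<Sum>i<s. c i * Jv n (a i) (n + l)) = (\<Sum>i<s. c i * a i l)"
        using True by (simp add: Jv_def)
      then show ?thesis using H True by (metis add_less_cancel_left mult_2)
    next
      case False
      have "(\<Sum>i<s. c i * Jv n (a i) (l - n)) = - (\<Sum>i<s. c i * a i l)"
      proof -
        have "l - n < n" "n + (l - n) = l" using False l by auto
        then show ?thesis by (simp add: Jv_def sum_negf)
      qed
      moreover have "(\<Sum>i<s. c i * Jv n (a i) (l - n)) mod p = 0" using H False l by simp
      ultimately have "p dvd (\<Sum>i<s. c i * a i l)" by (simp add: dvd_eq_mod_eq_0[symmetric])
      then show ?thesis by simp
    qed
  qed
  then show "c i mod p = 0" using assms i unfolding indep_def by blast
qed

lemma indep_prefix: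
  assumes "indep p N (Suc s) a"
  shows "indep p N s a"
  unfolding indep_def
proof (intro allI impI)
  fix c i assume H: "\<forall>l<N. (\<Sum>i<s. c i * a i l) mod p = 0" and i: "i < s"
  have "\<forall>l<N. (\<Sum>i<Suc s. (c(s:=0)) i * a i l) mod p = 0" using H by simp
  then have "\<forall>i<Suc s. (c(s:=0)) i mod p = 0" using assms unfolding indep_def by blast
  then have "(c(s:=0)) i mod p = 0" using i less_SucI by blast
  then show "c i mod p = 0" using i by simp
qed

lemma indep_cong:
  assumes "\<forall>i<s. a i = b i"
  shows "indep p N s a = indep p N s b"
  unfolding indep_def using assms by simp


lemma tuple_step:
  assumes fA: "finite A" and z: "\<forall>a\<in>A. a s = z" and fB: "\<forall>a\<in>A. finite (B a)"
    and cB: "\<forall>a\<in>A. card (B a) = E"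
  shows "card ((\<lambda>(a,b). a(s:=b)) ` Sigma A B) = card A * E"
proof -
  have "inj_on (\<lambda>(a,b). a(s:=b)) (Sigma A B)"
  proof (rule inj_onI, clarify)
    fix a b a' b' assume a: "a \<in> A" "b \<in> B a" "a' \<in> A" "b' \<in> B a'" and e: "a(s := b) = a'(s := b')"
    have "b = b'" using fun_cong[OF e, of s] by simp
    moreover have "a i = a' i" for i
    proof (cases "i = s")
      case True then show ?thesis using z a(1,3) by metis
    next
      case False then show ?thesis using fun_cong[OF e, of i] by simp
    qed
    ultimately show "a = a' \<and> b = b'" by auto
  qed
  then have "card ((\<lambda>(a,b). a(s:=b)) ` Sigma A B) = card (Sigma A B)" by (rule card_image)
  also have "\<dots> = (\<Sum>a\<in>A. card (B a))" using fA fB by (rule card_SigmaI)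
  also have "\<dots> = card A * E" using cB by simp
  finally show ?thesis .
qed

lemma kerv_card_exact:
  assumes p: "prime (p::int)" and ind: "indep p N t F" and tN: "t \<le> N"
  shows "card (kerv (p^e) N t F) = nat (p^e) ^ (N - t)"
proof -
  have X: "nat (p^e) > 0" using p by (simp add: prime_gt_0_int)
  have "card (kerv (p^e) N t F) * nat (p^e) ^ t = nat (p^e) ^ (N - t) * nat (p^e) ^ t"
    using ker_card[OF p ind, of e] tN by (simp add: power_add[symmetric])
  then show ?thesis using X by simp
qed

definition Tsym :: "int \<Rightarrow> int \<Rightarrow> nat \<Rightarrow> nat \<Rightarrow> (nat \<Rightarrow> nat \<Rightarrow> int) set" where
  "Tsym P q n s = {a. (\<forall>j<s. a j \<in> vecs q (2*n)) \<and> (\<forall>j\<ge>s. a j = (\<lambda>_. 0)) \<and> indep P (2*n) s a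
      \<and> (\<forall>i<s. \<forall>j<s. symp n (a i) (a j) mod q = 0)}"

definition ExtS :: "int \<Rightarrow> int \<Rightarrow> nat \<Rightarrow> nat \<Rightarrow> (nat \<Rightarrow> nat \<Rightarrow> int) \<Rightarrow> (nat \<Rightarrow> int) set" where
  "ExtS P q n s a = {b \<in> kerv q (2*n) s (\<lambda>i. Jv n (a i)). indep P (2*n) (Suc s) (a(s:=b))}"

lemma ExtS_sub: "ExtS P q n s a \<subseteq> vecs q (2*n)"
  unfolding ExtS_def kerv_def by (rule subsetI) simp

lemma Tsym_finite: "finite (Tsym P q n s)"
proof -
  have "Tsym P q n s \<subseteq> funs s (vecs q (2*n)) (\<lambda>_. 0)" by (auto simp: Tsym_def funs_def)
  moreover have "finite (funs s (vecs q (2*n)) (\<lambda>_. 0))" by (rule conjunct1[OF funs_card[OF vecs_finite]])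
  ultimately show ?thesis by (rule finite_subset)
qed

lemma Tsym_Suc: "Tsym P q n (Suc s) = (\<lambda>(a,b). a(s:=b)) ` Sigma (Tsym P q n s) (ExtS P q n s)"
proof
  show "Tsym P q n (Suc s) \<subseteq> (\<lambda>(a,b). a(s:=b)) ` Sigma (Tsym P q n s) (ExtS P q n s)"
  proof
    fix a' assume a': "a' \<in> Tsym P q n (Suc s)"
    define a where "a = a'(s := (\<lambda>_. 0))"
    have eq: "a' = (\<lambda>(a,b). a(s:=b)) (a, a' s)" by (simp add: a_def)
    have ia: "indep P (2*n) (Suc s) a'" using a' by (simp add: Tsym_def)
    have "a \<in> Tsym P q n s"
    proof -
      have "indep P (2*n) s a'" using indep_prefix[OF ia] .
      then have "indep P (2*n) s a" by (subst indep_cong[of s a a']) (auto simp: a_def)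
      then show ?thesis using a' unfolding Tsym_def a_def by auto
    qed
    moreover have "a' s \<in> ExtS P q n s a"
    proof -
      have "a' s \<in> vecs q (2*n)" using a' by (simp add: Tsym_def)
      moreover have "\<forall>i<s. dot (2*n) (Jv n (a i)) (a' s) mod q = 0"
        using a' by (auto simp: Tsym_def a_def symp_dot[symmetric])
      moreover have "a(s := a' s) = a'" by (simp add: a_def)
      ultimately show ?thesis using ia by (simp add: ExtS_def kerv_def)
    qed
    ultimately show "a' \<in> (\<lambda>(a,b). a(s:=b)) ` Sigma (Tsym P q n s) (ExtS P q n s)"
      using eq by blast
  qed
  show "(\<lambda>(a,b). a(s:=b)) ` Sigma (Tsym P q n s) (ExtS P q n s) \<subseteq> Tsym P q n (Suc s)"
  proof clarify
    fix a b assume a: "a \<in> Tsym P q n s" and b: "b \<in> ExtS P q n s a"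
    have bv: "b \<in> vecs q (2*n)" and bo: "\<forall>i<s. symp n (a i) b mod q = 0"
      and bi: "indep P (2*n) (Suc s) (a(s:=b))"
      using b by (auto simp: ExtS_def kerv_def symp_dot)
    have av: "\<forall>j<s. a j \<in> vecs q (2*n)" and az: "\<forall>j\<ge>s. a j = (\<lambda>_. 0)"
      and ao: "\<forall>i<s. \<forall>j<s. symp n (a i) (a j) mod q = 0"
      using a unfolding Tsym_def by blast+
    have "\<forall>i<Suc s. \<forall>j<Suc s. symp n ((a(s:=b)) i) ((a(s:=b)) j) mod q = 0"
    proof (intro allI impI)
      fix i j assume i: "i < Suc s" and j: "j < Suc s"
      show "symp n ((a(s:=b)) i) ((a(s:=b)) j) mod q = 0"
      proof (cases "i = s")
        case True
        show ?thesis
        proof (cases "j = s")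
          case True then show ?thesis using \<open>i = s\<close> by (simp add: symp_self)
        next
          case False
          then have "j < s" using j by simp
          then have "symp n (a j) b mod q = 0" using bo by simp
          moreover have "symp n b (a j) = - symp n (a j) b" by (rule symp_antisym)
          ultimately have "symp n b (a j) mod q = 0" by (simp add: zmod_zminus1_eq_if)
          moreover have "(a(s:=b)) i = b" "(a(s:=b)) j = a j" using \<open>i = s\<close> False by simp_all
          ultimately show ?thesis by simp
        qed
      next
        case False
        then have "i < s" using i by simp
        show ?thesis
        proof (cases "j = s")
          case True then show ?thesis using \<open>i < s\<close> bo False by simp
        next
          case False
          then have "j < s" using j by simp
          then show ?thesis using \<open>i < s\<close> ao \<open>i \<noteq> s\<close> False by simp
        qed
      qed
    qed
    moreover have "\<forall>j<Suc s. (a(s:=b)) j \<in> vecs q (2*n)" using av bv by (simp add: less_Suc_eq)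
    moreover have "\<forall>j\<ge>Suc s. (a(s:=b)) j = (\<lambda>_. 0)" using az by simp
    ultimately show "a(s:=b) \<in> Tsym P q n (Suc s)" using bi by (simp add: Tsym_def)
  qed
qed

lemma ExtS_card:
  assumes p: "prime (P::int)" and m: "m > 0" and a: "a \<in> Tsym P (P^m) n s" and s: "s \<le> 2*n"
  shows "card (ExtS P (P^m) n s a) + nat P ^ s * nat (P^(m-1)) ^ (2*n - s) = nat (P^m) ^ (2*n - s)"
proof -
  have ia: "indep P (2*n) s a" using a by (simp add: Tsym_def)
  have iF: "indep P (2*n) s (\<lambda>i. Jv n (a i))" by (rule indep_Jv[OF ia])
  have aK: "\<forall>i<s. a i \<in> kerv (P^m) (2*n) s (\<lambda>i. Jv n (a i))"
  proof -
    have av: "\<forall>j<s. a j \<in> vecs (P^m) (2*n)" and ao: "\<forall>i<s. \<forall>j<s. symp n (a i) (a j) mod (P^m) = 0"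
      using a unfolding Tsym_def by blast+
    show ?thesis unfolding kerv_def symp_dot[symmetric] using av ao by simp
  qed
  have e1: "card (ExtS P (P^m) n s a) + nat P ^ s * card (kerv (P^(m-1)) (2*n) s (\<lambda>i. Jv n (a i)))
      = card (kerv (P^m) (2*n) s (\<lambda>i. Jv n (a i)))"
    using ext_count[OF p m aK ia] unfolding ExtS_def .
  have e2: "card (kerv (P^(m-1)) (2*n) s (\<lambda>i. Jv n (a i))) = nat (P^(m-1)) ^ (2*n - s)"
    by (rule kerv_card_exact[OF p iF s])
  have e3: "card (kerv (P^m) (2*n) s (\<lambda>i. Jv n (a i))) = nat (P^m) ^ (2*n - s)"
    by (rule kerv_card_exact[OF p iF s])
  show ?thesis using e1 unfolding e2 e3 .
qed

lemma Tsym_card: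
  assumes p: "prime (P::int)" and m: "m > 0"
  shows "s \<le> 2*n \<Longrightarrow> card (Tsym P (P^m) n s) = (\<Prod>j<s. nat (P^m) ^ (2*n - j) - nat P ^ j * nat (P^(m-1)) ^ (2*n - j))"
proof (induction s)
  case 0
  have "Tsym P (P^m) n 0 = {\<lambda>_ _. 0}"
  proof
    show "Tsym P (P^m) n 0 \<subseteq> {\<lambda>_ _. 0}"
    proof
      fix a assume "a \<in> Tsym P (P^m) n 0"
      then have "\<forall>j. a j = (\<lambda>_. 0)" unfolding Tsym_def by blast
      then have "a = (\<lambda>_ _. 0)" by (simp add: fun_eq_iff)
      then show "a \<in> {\<lambda>_ _. 0}" by simp
    qed
    show "{\<lambda>_ _. 0} \<subseteq> Tsym P (P^m) n 0" by (simp add: Tsym_def indep_def)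
  qed
  then show ?case by simp
next
  case (Suc s)
  have "card (Tsym P (P^m) n (Suc s)) = card (Tsym P (P^m) n s) * (nat (P^m) ^ (2*n - s) - nat P ^ s * nat (P^(m-1)) ^ (2*n - s))"
    unfolding Tsym_Suc
  proof (rule tuple_step)
    show "finite (Tsym P (P ^ m) n s)" by (rule Tsym_finite)
    show "\<forall>a\<in>Tsym P (P ^ m) n s. a s = (\<lambda>_. 0)" unfolding Tsym_def by blast
    show "\<forall>a\<in>Tsym P (P ^ m) n s. finite (ExtS P (P ^ m) n s a)"
    proof
      fix a show "finite (ExtS P (P ^ m) n s a)"
        by (rule finite_subset[OF ExtS_sub vecs_finite])
    qed
    show "\<forall>a\<in>Tsym P (P ^ m) n s. card (ExtS P (P ^ m) n s a) = nat (P^m) ^ (2*n - s) - nat P ^ s * nat (P^(m-1)) ^ (2*n - s)"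
    proof
      fix a assume a: "a \<in> Tsym P (P ^ m) n s"
      have "s \<le> 2*n" using Suc.prems by simp
      from ExtS_card[OF p m a this] show "card (ExtS P (P ^ m) n s a) = nat (P^m) ^ (2*n - s) - nat P ^ s * nat (P^(m-1)) ^ (2*n - s)"
        by (metis add_diff_cancel_right')
    qed
  qed
  moreover have "s \<le> 2*n" using Suc.prems by simp
  ultimately show ?case using Suc.IH by (simp only: prod.lessThan_Suc)
qed


definition Tgl :: "int \<Rightarrow> int \<Rightarrow> nat \<Rightarrow> nat \<Rightarrow> (nat \<Rightarrow> nat \<Rightarrow> int) set" where
  "Tgl P q N s = {a. (\<forall>j<s. a j \<in> vecs q N) \<and> (\<forall>j\<ge>s. a j = (\<lambda>_. 0)) \<and> indep P N s a}"

definition ExtG :: "int \<Rightarrow> int \<Rightarrow> nat \<Rightarrow> nat \<Rightarrow> (nat \<Rightarrow> nat \<Rightarrow> int) \<Rightarrow> (nat \<Rightarrow> int) set" where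
  "ExtG P q N s a = {b \<in> kerv q N 0 (\<lambda>_ _. 0). indep P N (Suc s) (a(s:=b))}"

lemma ExtG_sub: "ExtG P q N s a \<subseteq> vecs q N"
  unfolding ExtG_def kerv_def by (rule subsetI) simp

lemma Tgl_finite: "finite (Tgl P q N s)"
proof -
  have "Tgl P q N s \<subseteq> funs s (vecs q N) (\<lambda>_. 0)" by (auto simp: Tgl_def funs_def)
  moreover have "finite (funs s (vecs q N) (\<lambda>_. 0))" by (rule conjunct1[OF funs_card[OF vecs_finite]])
  ultimately show ?thesis by (rule finite_subset)
qed

lemma Tgl_Suc: "Tgl P q N (Suc s) = (\<lambda>(a,b). a(s:=b)) ` Sigma (Tgl P q N s) (ExtG P q N s)"
proof
  show "Tgl P q N (Suc s) \<subseteq> (\<lambda>(a,b). a(s:=b)) ` Sigma (Tgl P q N s) (ExtG P q N s)"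
  proof
    fix a' assume a': "a' \<in> Tgl P q N (Suc s)"
    define a where "a = a'(s := (\<lambda>_. 0))"
    have eq: "a' = (\<lambda>(a,b). a(s:=b)) (a, a' s)" by (simp add: a_def)
    have ia: "indep P N (Suc s) a'" using a' by (simp add: Tgl_def)
    have "a \<in> Tgl P q N s"
    proof -
      have "indep P N s a'" using indep_prefix[OF ia] .
      then have "indep P N s a" by (subst indep_cong[of s a a']) (auto simp: a_def)
      then show ?thesis using a' unfolding Tgl_def a_def by auto
    qed
    moreover have "a' s \<in> ExtG P q N s a"
    proof -
      have "a' s \<in> vecs q N" using a' by (simp add: Tgl_def)
      moreover have "a(s := a' s) = a'" by (simp add: a_def)
      ultimately show ?thesis using ia by (simp add: ExtG_def kerv_def)
    qed
    ultimately show "a' \<in> (\<lambda>(a,b). a(s:=b)) ` Sigma (Tgl P q N s) (ExtG P q N s)"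
      using eq by blast
  qed
  show "(\<lambda>(a,b). a(s:=b)) ` Sigma (Tgl P q N s) (ExtG P q N s) \<subseteq> Tgl P q N (Suc s)"
  proof clarify
    fix a b assume a: "a \<in> Tgl P q N s" and b: "b \<in> ExtG P q N s a"
    have bv: "b \<in> vecs q N" and bi: "indep P N (Suc s) (a(s:=b))"
      using b by (auto simp: ExtG_def kerv_def)
    have av: "\<forall>j<s. a j \<in> vecs q N" and az: "\<forall>j\<ge>s. a j = (\<lambda>_. 0)"
      using a unfolding Tgl_def by blast+
    have "\<forall>j<Suc s. (a(s:=b)) j \<in> vecs q N" using av bv by (simp add: less_Suc_eq)
    moreover have "\<forall>j\<ge>Suc s. (a(s:=b)) j = (\<lambda>_. 0)" using az by simp
    ultimately show "a(s:=b) \<in> Tgl P q N (Suc s)" using bi by (simp add: Tgl_def)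
  qed
qed

lemma ExtG_card:
  assumes p: "prime (P::int)" and m: "m > 0" and a: "a \<in> Tgl P (P^m) N s"
  shows "card (ExtG P (P^m) N s a) + nat P ^ s * nat (P^(m-1)) ^ N = nat (P^m) ^ N"
proof -
  have ia: "indep P N s a" using a by (simp add: Tgl_def)
  have iF: "indep P N 0 (\<lambda>_ _. 0)" by (simp add: indep_def)
  have aK: "\<forall>i<s. a i \<in> kerv (P^m) N 0 (\<lambda>_ _. 0)"
  proof -
    have av: "\<forall>j<s. a j \<in> vecs (P^m) N" using a unfolding Tgl_def by blast
    then show ?thesis unfolding kerv_def by simp
  qed
  have e1: "card (ExtG P (P^m) N s a) + nat P ^ s * card (kerv (P^(m-1)) N 0 (\<lambda>_ _. 0))
      = card (kerv (P^m) N 0 (\<lambda>_ _. 0))"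
    using ext_count[OF p m aK ia] unfolding ExtG_def .
  have e2: "card (kerv (P^(m-1)) N 0 (\<lambda>_ _. 0)) = nat (P^(m-1)) ^ (N - 0)"
    by (rule kerv_card_exact[OF p iF]) simp
  have e3: "card (kerv (P^m) N 0 (\<lambda>_ _. 0)) = nat (P^m) ^ (N - 0)"
    by (rule kerv_card_exact[OF p iF]) simp
  show ?thesis using e1 unfolding e2 e3 by simp
qed

lemma Tgl_card:
  assumes p: "prime (P::int)" and m: "m > 0"
  shows "card (Tgl P (P^m) N s) = (\<Prod>j<s. nat (P^m) ^ N - nat P ^ j * nat (P^(m-1)) ^ N)"
proof (induction s)
  case 0
  have "Tgl P (P^m) N 0 = {\<lambda>_ _. 0}"
  proof
    show "Tgl P (P^m) N 0 \<subseteq> {\<lambda>_ _. 0}"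
    proof
      fix a assume "a \<in> Tgl P (P^m) N 0"
      then have "\<forall>j. a j = (\<lambda>_. 0)" unfolding Tgl_def by blast
      then have "a = (\<lambda>_ _. 0)" by (simp add: fun_eq_iff)
      then show "a \<in> {\<lambda>_ _. 0}" by simp
    qed
    show "{\<lambda>_ _. 0} \<subseteq> Tgl P (P^m) N 0" by (simp add: Tgl_def indep_def)
  qed
  then show ?case by simp
next
  case (Suc s)
  have "card (Tgl P (P^m) N (Suc s)) = card (Tgl P (P^m) N s) * (nat (P^m) ^ N - nat P ^ s * nat (P^(m-1)) ^ N)"
    unfolding Tgl_Suc
  proof (rule tuple_step)
    show "finite (Tgl P (P ^ m) N s)" by (rule Tgl_finite)
    show "\<forall>a\<in>Tgl P (P ^ m) N s. a s = (\<lambda>_. 0)" unfolding Tgl_def by blast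
    show "\<forall>a\<in>Tgl P (P ^ m) N s. finite (ExtG P (P ^ m) N s a)"
    proof
      fix a show "finite (ExtG P (P ^ m) N s a)"
        by (rule finite_subset[OF ExtG_sub vecs_finite])
    qed
    show "\<forall>a\<in>Tgl P (P ^ m) N s. card (ExtG P (P ^ m) N s a) = nat (P^m) ^ N - nat P ^ s * nat (P^(m-1)) ^ N"
    proof
      fix a assume a: "a \<in> Tgl P (P ^ m) N s"
      from ExtG_card[OF p m a] show "card (ExtG P (P ^ m) N s a) = nat (P^m) ^ N - nat P ^ s * nat (P^(m-1)) ^ N"
        by (metis add_diff_cancel_right')
    qed
  qed
  then show ?case using Suc.IH by (simp only: prod.lessThan_Suc)
qed


lemma sum_mod_cong:
  assumes "\<forall>i\<in>A. f i mod d = g i mod (d::int)"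
  shows "(\<Sum>i\<in>A. f i) mod d = (\<Sum>i\<in>A. g i) mod d"
proof -
  have "d dvd (\<Sum>i\<in>A. f i - g i)"
    by (rule dvd_sum) (use assms in \<open>simp add: mod_eq_dvd_iff\<close>)
  then show ?thesis by (simp add: mod_eq_dvd_iff sum_subtractf)
qed

lemma swap_lemma:
  fixes x :: "'i \<Rightarrow> 'a::comm_ring_1"
  shows "(\<Sum>i\<in>A. x i * (\<Sum>j\<in>B. M i j * v j)) = (\<Sum>j\<in>B. (\<Sum>i\<in>A. x i * M i j) * v j)"
proof -
  have "(\<Sum>i\<in>A. x i * (\<Sum>j\<in>B. M i j * v j)) = (\<Sum>i\<in>A. \<Sum>j\<in>B. x i * M i j * v j)"
    by (simp add: sum_distrib_left mult.assoc)
  also have "\<dots> = (\<Sum>j\<in>B. \<Sum>i\<in>A. x i * M i j * v j)" by (rule sum.swap)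
  also have "\<dots> = (\<Sum>j\<in>B. (\<Sum>i\<in>A. x i * M i j) * v j)" by (simp add: sum_distrib_right)
  finally show ?thesis .
qed

lemma lincomb_vecs: "d > 0 \<Longrightarrow> lincomb d n r a x \<in> vecs (int d) (2*n)"
  by (auto simp: lincomb_def vecs_def)

lemma lincomb_cong:
  assumes "\<forall>j<r. x j mod int d = y j mod int d"
  shows "lincomb d n r a x = lincomb d n r a y"
proof
  fix l
  have "(\<Sum>j<r. x j * a j l) mod int d = (\<Sum>j<r. y j * a j l) mod int d"
    by (rule sum_mod_cong) (use assms in \<open>auto intro: mod_mult_cong\<close>)
  then show "lincomb d n r a x l = lincomb d n r a y l" by (simp add: lincomb_def)
qed

lemma lincomb_inj:
  assumes li: "lin_indep d n r a" and e: "lincomb d n r a x = lincomb d n r a y"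
  shows "\<forall>j<r. x j mod int d = y j mod int d"
proof -
  have "lincomb d n r a (\<lambda>j. x j - y j) = (\<lambda>_. 0)"
  proof
    fix l
    show "lincomb d n r a (\<lambda>j. x j - y j) l = 0"
    proof (cases "l < 2*n")
      case True
      have "(\<Sum>j<r. x j * a j l) mod int d = (\<Sum>j<r. y j * a j l) mod int d"
        using fun_cong[OF e, of l] True by (simp add: lincomb_def)
      then have "int d dvd (\<Sum>j<r. x j * a j l) - (\<Sum>j<r. y j * a j l)" by (simp add: mod_eq_dvd_iff)
      moreover have "(\<Sum>j<r. (x j - y j) * a j l) = (\<Sum>j<r. x j * a j l) - (\<Sum>j<r. y j * a j l)"
        by (simp add: algebra_simps sum_subtractf)
      ultimately show ?thesis using True by (simp add: lincomb_def)
    next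
      case False then show ?thesis by (simp add: lincomb_def)
    qed
  qed
  then have "\<forall>j<r. (x j - y j) mod int d = 0" using li unfolding lin_indep_def by blast
  then show ?thesis by (simp add: mod_eq_dvd_iff dvd_eq_mod_eq_0)
qed

lemma zspan_eq: "d > 0 \<Longrightarrow> zspan d n r a = lincomb d n r a ` vecs (int d) r"
proof
  assume d: "d > 0"
  show "zspan d n r a \<subseteq> lincomb d n r a ` vecs (int d) r"
  proof
    fix v assume "v \<in> zspan d n r a"
    then obtain x where v: "v = lincomb d n r a x" by (auto simp: zspan_def)
    have "v = lincomb d n r a (vmod (int d) r x)"
      unfolding v by (rule lincomb_cong) (simp add: vmod_def)
    moreover have "vmod (int d) r x \<in> vecs (int d) r" using d by (simp add: vmod_vecs)
    ultimately show "v \<in> lincomb d n r a ` vecs (int d) r" by blast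
  qed
  show "lincomb d n r a ` vecs (int d) r \<subseteq> zspan d n r a" by (auto simp: zspan_def)
qed

lemma zspan_card:
  assumes d: "d > 0" and li: "lin_indep d n r a"
  shows "card (zspan d n r a) = d ^ r" "finite (zspan d n r a)"
proof -
  have "inj_on (lincomb d n r a) (vecs (int d) r)"
  proof (rule inj_onI)
    fix x y assume x: "x \<in> vecs (int d) r" and y: "y \<in> vecs (int d) r" and e: "lincomb d n r a x = lincomb d n r a y"
    have h: "\<forall>j<r. x j mod int d = y j mod int d" by (rule lincomb_inj[OF li e])
    show "x = y"
    proof
      fix j show "x j = y j"
        using h x y by (cases "j < r") (auto simp: vecs_def)
    qed
  qed
  then show "card (zspan d n r a) = d ^ r"
    unfolding zspan_eq[OF d] by (simp add: card_image vecs_card)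
  show "finite (zspan d n r a)" unfolding zspan_eq[OF d] using vecs_finite by simp
qed

lemma lincomb_comp:
  "lincomb d n r (\<lambda>i. lincomb d n r a0 (M i)) x = lincomb d n r a0 (\<lambda>j. \<Sum>i<r. x i * M i j)"
proof
  fix l
  show "lincomb d n r (\<lambda>i. lincomb d n r a0 (M i)) x l = lincomb d n r a0 (\<lambda>j. \<Sum>i<r. x i * M i j) l"
  proof (cases "l < 2*n")
    case True
    have "(\<Sum>i<r. x i * lincomb d n r a0 (M i) l) mod int d = (\<Sum>i<r. x i * (\<Sum>j<r. M i j * a0 j l)) mod int d"
      by (rule sum_mod_cong) (use True in \<open>auto simp: lincomb_def intro: mod_mult_cong\<close>)
    also have "(\<Sum>i<r. x i * (\<Sum>j<r. M i j * a0 j l)) = (\<Sum>j<r. (\<Sum>i<r. x i * M i j) * a0 j l)"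
      by (rule swap_lemma)
    finally show ?thesis using True by (simp add: lincomb_def)
  next
    case False then show ?thesis by (simp add: lincomb_def)
  qed
qed

lemma lincomb_modp:
  assumes pd: "p dvd int d" and l: "l < 2*n"
  shows "(\<Sum>i<r. c i * lincomb d n r a0 (M i) l) mod p = (\<Sum>j<r. (\<Sum>i<r. c i * M i j) * a0 j l) mod p"
proof -
  have "(\<Sum>i<r. c i * lincomb d n r a0 (M i) l) mod p = (\<Sum>i<r. c i * (\<Sum>j<r. M i j * a0 j l)) mod p"
  proof (rule sum_mod_cong, intro ballI)
    fix i
    have "lincomb d n r a0 (M i) l mod p = (\<Sum>j<r. M i j * a0 j l) mod p"
      using l pd by (simp add: lincomb_def mod_mod_cancel)
    then show "c i * lincomb d n r a0 (M i) l mod p = c i * (\<Sum>j<r. M i j * a0 j l) mod p"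
      by (intro mod_mult_cong) simp_all
  qed
  also have "(\<Sum>i<r. c i * (\<Sum>j<r. M i j * a0 j l)) = (\<Sum>j<r. (\<Sum>i<r. c i * M i j) * a0 j l)"
    by (rule swap_lemma)
  finally show ?thesis .
qed

lemma symp_mod_cong:
  assumes "\<forall>l<2*n. u l mod d = u' l mod (d::int)" "\<forall>l<2*n. v l mod d = v' l mod d"
  shows "symp n u v mod d = symp n u' v' mod d"
  unfolding symp_def
proof (rule sum_mod_cong, intro ballI)
  fix i assume "i \<in> {..<n}"
  then have i: "i < 2*n" "n + i < 2*n" by auto
  show "(u i * v (n + i) - u (n + i) * v i) mod d = (u' i * v' (n + i) - u' (n + i) * v' i) mod d"
    using assms i by (intro mod_diff_cong mod_mult_cong) auto
qed

lemma Jv_lin: "Jv n (\<lambda>l. \<Sum>i<r. x i * a i l) = (\<lambda>l. \<Sum>i<r. x i * Jv n (a i) l)"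
proof
  fix l show "Jv n (\<lambda>l. \<Sum>i<r. x i * a i l) l = (\<Sum>i<r. x i * Jv n (a i) l)"
    by (cases "l < n"; cases "l < 2*n") (simp_all add: Jv_def sum_negf)
qed

lemma dot_lin1: "dot N (\<lambda>l. \<Sum>i<r. x i * g i l) v = (\<Sum>i<r. x i * dot N (g i) v)"
  unfolding dot_def by (rule swap_lemma[symmetric])

lemma symp_lincomb:
  assumes ao: "\<forall>i<r. \<forall>j<r. symp n (a i) (a j) mod int d = 0"
  shows "symp n (lincomb d n r a x) (lincomb d n r a y) mod int d = 0"
proof -
  define S where "S = (\<lambda>x l. \<Sum>j<r. x j * a j l)"
  have "symp n (lincomb d n r a x) (lincomb d n r a y) mod int d = symp n (S x) (S y) mod int d"
    by (rule symp_mod_cong) (auto simp: lincomb_def S_def)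
  also have "symp n (S x) (S y) = (\<Sum>i<r. x i * (\<Sum>j<r. y j * symp n (a i) (a j)))"
    unfolding symp_dot S_def Jv_lin dot_lin1 dot_lincomb by simp
  also have "\<dots> mod int d = 0"
  proof -
    have "int d dvd (\<Sum>i<r. x i * (\<Sum>j<r. y j * symp n (a i) (a j)))"
    proof (rule dvd_sum)
      fix i assume i: "i \<in> {..<r}"
      have "int d dvd (\<Sum>j<r. y j * symp n (a i) (a j))"
      proof (rule dvd_sum)
        fix j assume "j \<in> {..<r}"
        then have "int d dvd symp n (a i) (a j)" using ao i by (simp add: dvd_eq_mod_eq_0)
        then show "int d dvd y j * symp n (a i) (a j)" by simp
      qed
      then show "int d dvd x i * (\<Sum>j<r. y j * symp n (a i) (a j))" by simp
    qed
    then show ?thesis by simp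
  qed
  finally show ?thesis .
qed


lemma zvecs_eq: "zvecs d n = vecs (int d) (2*n)"
  by (simp add: zvecs_def vecs_def)

lemma lincomb_cong_vecs:
  assumes "\<forall>j<r. a j = b j"
  shows "lincomb d n r a x = lincomb d n r b x"
proof -
  have h: "(\<Sum>j<r. x j * a j i) = (\<Sum>j<r. x j * b j i)" for i using assms by (intro sum.cong) auto
  show ?thesis
  proof
    fix i show "lincomb d n r a x i = lincomb d n r b x i" unfolding lincomb_def using h[of i] by simp
  qed
qed

lemma zspan_cong_vecs:
  assumes "\<forall>j<r. a j = b j"
  shows "zspan d n r a = zspan d n r b"
  unfolding zspan_def using lincomb_cong_vecs[OF assms] by simp

lemma lin_indep_Tsym:
  assumes p: "prime (P::int)" and m: "m > 0" and D: "int d = P^m"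
  shows "lin_indep d n r a \<longleftrightarrow> indep P (2*n) r a"
  unfolding lin_indep_eq D using indep_pow[OF p m] by simp

lemma codes_eq:
  assumes p: "prime (P::int)" and m: "m > 0" and D: "int d = P^m"
  shows "stab_codes d n k = zspan d n (n-k) ` Tsym P (int d) n (n-k)"
proof
  let ?r = "n - k"
  show "stab_codes d n k \<subseteq> zspan d n ?r ` Tsym P (int d) n ?r"
  proof
    fix C assume "C \<in> stab_codes d n k"
    then obtain a where C: "C = zspan d n ?r a" and av: "\<forall>j<?r. a j \<in> zvecs d n"
      and li: "lin_indep d n ?r a" and ao: "\<forall>i<?r. \<forall>j<?r. symp n (a i) (a j) mod int d = 0"
      unfolding stab_codes_def by blast
    define a' where "a' = (\<lambda>j. if j < ?r then a j else (\<lambda>_. 0))"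
    have eqa: "\<forall>j<?r. a' j = a j" by (simp add: a'_def)
    have "C = zspan d n ?r a'" unfolding C by (rule zspan_cong_vecs) (simp add: a'_def)
    moreover have "a' \<in> Tsym P (int d) n ?r"
    proof -
      have "indep P (2*n) ?r a" using li lin_indep_Tsym[OF p m D] by simp
      then have "indep P (2*n) ?r a'" using indep_cong[OF eqa] by simp
      moreover have "\<forall>j<?r. a' j \<in> vecs (int d) (2*n)" using av by (simp add: a'_def zvecs_eq)
      moreover have "\<forall>j\<ge>?r. a' j = (\<lambda>_. 0)" by (simp add: a'_def)
      moreover have "\<forall>i<?r. \<forall>j<?r. symp n (a' i) (a' j) mod int d = 0" using ao by (simp add: a'_def)
      ultimately show ?thesis unfolding Tsym_def by blast
    qed
    ultimately show "C \<in> zspan d n ?r ` Tsym P (int d) n ?r" by blast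
  qed
  show "zspan d n ?r ` Tsym P (int d) n ?r \<subseteq> stab_codes d n k"
  proof
    fix C assume "C \<in> zspan d n ?r ` Tsym P (int d) n ?r"
    then obtain a where C: "C = zspan d n ?r a" and a: "a \<in> Tsym P (int d) n ?r" by blast
    have av: "\<forall>j<?r. a j \<in> vecs (int d) (2*n)" and ai: "indep P (2*n) ?r a"
      and ao: "\<forall>i<?r. \<forall>j<?r. symp n (a i) (a j) mod int d = 0"
      using a unfolding Tsym_def by blast+
    have "lin_indep d n ?r a" using ai lin_indep_Tsym[OF p m D] by simp
    then show "C \<in> stab_codes d n k" unfolding stab_codes_def C using av ao by (auto simp: zvecs_eq)
  qed
qed

lemma lincomb_unit:
  assumes "a i \<in> vecs (int d) (2*n)" "i < r"
  shows "lincomb d n r a (\<lambda>j. if j = i then 1 else 0) = a i"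
proof
  fix l show "lincomb d n r a (\<lambda>j. if j = i then 1 else 0) l = a i l"
  proof (cases "l < 2*n")
    case True
    have "(\<Sum>j<r. (if j = i then 1 else 0) * a j l) = a i l"
      using assms(2) by (simp add: if_distrib[of "\<lambda>x. x * _"] sum.delta cong: if_cong)
    then show ?thesis using True assms(1) by (simp add: lincomb_def vecs_def)
  next
    case False then show ?thesis using assms(1) by (simp add: lincomb_def vecs_def)
  qed
qed

lemma fiber_card2:
  assumes p: "prime (P::int)" and m: "m > 0" and D: "int d = P^m"
    and a0: "a0 \<in> Tsym P (int d) n r"
  shows "card {a \<in> Tsym P (int d) n r. zspan d n r a = zspan d n r a0} = card (Tgl P (int d) r r)"
proof -
  have d0: "d > 0" using D p by (metis of_nat_0_less_iff prime_gt_0_int zero_less_power)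
  have Pd: "P dvd int d" using D m by simp
  have li_T: "lin_indep d n r a" if "a \<in> Tsym P (int d) n r" for a
    using that lin_indep_Tsym[OF p m D] unfolding Tsym_def by blast
  have a0v: "\<forall>j<r. a0 j \<in> vecs (int d) (2*n)" and a0i: "indep P (2*n) r a0"
    and a0o: "\<forall>i<r. \<forall>j<r. symp n (a0 i) (a0 j) mod int d = 0"
    using a0 unfolding Tsym_def by blast+
  define Phi where "Phi = (\<lambda>M i. if i < r then lincomb d n r a0 (M i) else (\<lambda>_::nat. 0::int))"
  have PhiT: "Phi M \<in> Tsym P (int d) n r" if M: "M \<in> Tgl P (int d) r r" for M
  proof -
    have Mi: "indep P r r M" using M unfolding Tgl_def by blast
    have "indep P (2*n) r (Phi M)" unfolding indep_def
    proof (intro allI impI)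
      fix c i assume H: "\<forall>l<2*n. (\<Sum>i<r. c i * Phi M i l) mod P = 0" and i: "i < r"
      have "\<forall>l<2*n. (\<Sum>j<r. (\<Sum>i<r. c i * M i j) * a0 j l) mod P = 0"
      proof (intro allI impI)
        fix l assume l: "l < 2*n"
        have e1: "(\<Sum>i<r. c i * Phi M i l) = (\<Sum>i<r. c i * lincomb d n r a0 (M i) l)"
          by (rule sum.cong) (auto simp: Phi_def)
        have e2: "(\<Sum>i<r. c i * lincomb d n r a0 (M i) l) mod P = (\<Sum>j<r. (\<Sum>i<r. c i * M i j) * a0 j l) mod P"
          by (rule lincomb_modp[OF Pd l])
        have "(\<Sum>i<r. c i * Phi M i l) mod P = 0" using H l by simp
        then show "(\<Sum>j<r. (\<Sum>i<r. c i * M i j) * a0 j l) mod P = 0"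
          unfolding e1 e2 .
      qed
      then have "\<forall>j<r. (\<Sum>i<r. c i * M i j) mod P = 0"
        using a0i unfolding indep_def by (drule_tac spec[where x="\<lambda>j. \<Sum>i<r. c i * M i j"]) simp
      then show "c i mod P = 0" using Mi i unfolding indep_def by blast
    qed
    moreover have "\<forall>j<r. Phi M j \<in> vecs (int d) (2*n)" using d0 by (simp add: Phi_def lincomb_vecs)
    moreover have "\<forall>j\<ge>r. Phi M j = (\<lambda>_. 0)" by (simp add: Phi_def)
    moreover have "\<forall>i<r. \<forall>j<r. symp n (Phi M i) (Phi M j) mod int d = 0"
      using symp_lincomb[OF a0o] by (simp add: Phi_def)
    ultimately show ?thesis unfolding Tsym_def by blast
  qed
  have PhiZ: "zspan d n r (Phi M) = zspan d n r a0" if M: "M \<in> Tgl P (int d) r r" for M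
  proof (rule card_subset_eq)
    show "finite (zspan d n r a0)" using zspan_card(2)[OF d0 li_T[OF a0]] .
    show "zspan d n r (Phi M) \<subseteq> zspan d n r a0"
    proof
      fix v assume "v \<in> zspan d n r (Phi M)"
      then obtain x where v: "v = lincomb d n r (Phi M) x" by (auto simp: zspan_def)
      have "v = lincomb d n r (\<lambda>i. lincomb d n r a0 (M i)) x"
        unfolding v by (rule lincomb_cong_vecs) (simp add: Phi_def)
      also have "\<dots> = lincomb d n r a0 (\<lambda>j. \<Sum>i<r. x i * M i j)" by (rule lincomb_comp)
      finally show "v \<in> zspan d n r a0" by (auto simp: zspan_def)
    qed
    show "card (zspan d n r (Phi M)) = card (zspan d n r a0)"
      using zspan_card(1)[OF d0 li_T[OF PhiT[OF M]]] zspan_card(1)[OF d0 li_T[OF a0]] by simp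
  qed
  have "bij_betw Phi (Tgl P (int d) r r) {a \<in> Tsym P (int d) n r. zspan d n r a = zspan d n r a0}"
  proof (rule bij_betw_imageI)
    show "inj_on Phi (Tgl P (int d) r r)"
    proof (rule inj_onI)
      fix M M' assume M: "M \<in> Tgl P (int d) r r" and M': "M' \<in> Tgl P (int d) r r" and e: "Phi M = Phi M'"
      have Mv: "\<forall>j<r. M j \<in> vecs (int d) r" "\<forall>j\<ge>r. M j = (\<lambda>_. 0)" using M unfolding Tgl_def by blast+
      have M'v: "\<forall>j<r. M' j \<in> vecs (int d) r" "\<forall>j\<ge>r. M' j = (\<lambda>_. 0)" using M' unfolding Tgl_def by blast+
      show "M = M'"
      proof
        fix i show "M i = M' i"
        proof (cases "i < r")
          case True
          have "lincomb d n r a0 (M i) = lincomb d n r a0 (M' i)" using fun_cong[OF e, of i] True by (simp add: Phi_def)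
          then have h: "\<forall>j<r. M i j mod int d = M' i j mod int d" by (rule lincomb_inj[OF li_T[OF a0]])
          show ?thesis
          proof
            fix j show "M i j = M' i j"
              using h Mv(1) M'v(1) True by (cases "j < r") (auto simp: vecs_def)
          qed
        next
          case False then show ?thesis using Mv(2) M'v(2) by simp
        qed
      qed
    qed
    show "Phi ` Tgl P (int d) r r = {a \<in> Tsym P (int d) n r. zspan d n r a = zspan d n r a0}"
    proof
      show "Phi ` Tgl P (int d) r r \<subseteq> {a \<in> Tsym P (int d) n r. zspan d n r a = zspan d n r a0}"
        using PhiT PhiZ by blast
      show "{a \<in> Tsym P (int d) n r. zspan d n r a = zspan d n r a0} \<subseteq> Phi ` Tgl P (int d) r r"
      proof
        fix a assume "a \<in> {a \<in> Tsym P (int d) n r. zspan d n r a = zspan d n r a0}"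
        then have a: "a \<in> Tsym P (int d) n r" and za: "zspan d n r a = zspan d n r a0" by auto
        have av: "\<forall>j<r. a j \<in> vecs (int d) (2*n)" and az: "\<forall>j\<ge>r. a j = (\<lambda>_. 0)"
          and ai: "indep P (2*n) r a"
          using a unfolding Tsym_def by blast+
        have "\<forall>i. \<exists>x. i < r \<longrightarrow> a i = lincomb d n r a0 x"
        proof
          fix i show "\<exists>x. i < r \<longrightarrow> a i = lincomb d n r a0 x"
          proof (cases "i < r")
            case True
            have "a i = lincomb d n r a (\<lambda>j. if j = i then 1 else 0)"
              using lincomb_unit[of a i d n r] av True by simp
            then have "a i \<in> zspan d n r a" by (auto simp: zspan_def)
            then have "a i \<in> zspan d n r a0" using za by simp
            then show ?thesis by (auto simp: zspan_def)
          next
            case False then show ?thesis by simp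
          qed
        qed
        then obtain X where X: "\<forall>i. i < r \<longrightarrow> a i = lincomb d n r a0 (X i)" by (metis choice)
        define M where "M = (\<lambda>i. if i < r then vmod (int d) r (X i) else (\<lambda>_. 0))"
        have lM: "lincomb d n r a0 (M i) = a i" if "i < r" for i
        proof -
          have "lincomb d n r a0 (M i) = lincomb d n r a0 (X i)"
            using that by (simp add: M_def) (rule lincomb_cong, simp add: vmod_def)
          then show ?thesis using X that by simp
        qed
        have "Phi M = a"
        proof
          fix i show "Phi M i = a i" using lM az by (cases "i < r") (auto simp: Phi_def)
        qed
        moreover have "M \<in> Tgl P (int d) r r"
        proof -
          have "indep P r r M" unfolding indep_def
          proof (intro allI impI)
            fix c i assume H: "\<forall>l<r. (\<Sum>i<r. c i * M i l) mod P = 0" and i: "i < r"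
            have "\<forall>l<2*n. (\<Sum>i<r. c i * a i l) mod P = 0"
            proof (intro allI impI)
              fix l assume l: "l < 2*n"
              have "(\<Sum>i<r. c i * a i l) = (\<Sum>i<r. c i * lincomb d n r a0 (M i) l)"
                by (rule sum.cong) (auto simp: lM)
              also have "\<dots> mod P = (\<Sum>j<r. (\<Sum>i<r. c i * M i j) * a0 j l) mod P"
                by (rule lincomb_modp[OF Pd l])
              also have "\<dots> = 0"
              proof -
                have "P dvd (\<Sum>j<r. (\<Sum>i<r. c i * M i j) * a0 j l)"
                proof (rule dvd_sum)
                  fix j assume "j \<in> {..<r}"
                  then have "P dvd (\<Sum>i<r. c i * M i j)" using H by (simp add: dvd_eq_mod_eq_0)
                  then show "P dvd (\<Sum>i<r. c i * M i j) * a0 j l" by simp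
                qed
                then show ?thesis by simp
              qed
              finally show "(\<Sum>i<r. c i * a i l) mod P = 0" .
            qed
            then show "c i mod P = 0" using ai i unfolding indep_def by blast
          qed
          moreover have "\<forall>j<r. M j \<in> vecs (int d) r" using d0 by (simp add: M_def vmod_vecs)
          moreover have "\<forall>j\<ge>r. M j = (\<lambda>_. 0)" by (simp add: M_def)
          ultimately show ?thesis unfolding Tgl_def by blast
        qed
        ultimately show "a \<in> Phi ` Tgl P (int d) r r" by blast
      qed
    qed
  qed
  then show ?thesis by (simp add: bij_betw_same_card)
qed


lemma codes_count:
  assumes p: "prime (P::int)" and m: "m > 0" and D: "int d = P^m"
  shows "card (Tsym P (int d) n r) = card (zspan d n r ` Tsym P (int d) n r) * card (Tgl P (int d) r r)"
proof -
  let ?T = "Tsym P (int d) n r"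
  let ?C = "zspan d n r ` ?T"
  have "?T = (\<Union>C\<in>?C. {a \<in> ?T. zspan d n r a = C})" by blast
  then have "card ?T = card (\<Union>C\<in>?C. {a \<in> ?T. zspan d n r a = C})" by simp
  also have "\<dots> = (\<Sum>C\<in>?C. card {a \<in> ?T. zspan d n r a = C})"
  proof (rule card_UN_disjoint)
    show "finite ?C" using Tsym_finite by simp
    show "\<forall>C\<in>?C. finite {a \<in> ?T. zspan d n r a = C}" using Tsym_finite by simp
    show "\<forall>C\<in>?C. \<forall>C'\<in>?C. C \<noteq> C' \<longrightarrow> {a \<in> ?T. zspan d n r a = C} \<inter> {a \<in> ?T. zspan d n r a = C'} = {}"
      by blast
  qed
  also have "\<dots> = (\<Sum>C\<in>?C. card (Tgl P (int d) r r))"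
  proof (rule sum.cong)
    fix C assume "C \<in> ?C"
    then obtain a0 where a0: "a0 \<in> ?T" and C: "C = zspan d n r a0" by blast
    show "card {a \<in> ?T. zspan d n r a = C} = card (Tgl P (int d) r r)"
      unfolding C by (rule fiber_card2[OF p m D a0])
  qed simp
  also have "\<dots> = card ?C * card (Tgl P (int d) r r)" by simp
  finally show ?thesis .
qed

lemma exp_identity:
  fixes r k :: nat
  shows "(\<Sum>j<r. 2*(r+k) - j) = (r * ((r+k) + 3*k + 1)) div 2 + r * r"
proof -
  have claim: "r \<le> n \<Longrightarrow> 2 * (\<Sum>j<r. 2*n - j) + r*r = 4*n*r + r" for n
  proof (induction r)
    case 0 then show ?case by simp
  next
    case (Suc r)
    then have IH: "2 * (\<Sum>j<r. 2*n - j) + r*r = 4*n*r + r" and rn: "r < n" by auto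
    obtain t where t: "2*n - r = t" "t + r = 2*n" using rn by auto
    have "2 * (\<Sum>j<Suc r. 2*n - j) + Suc r * Suc r = 2 * (\<Sum>j<r. 2*n - j) + r*r + 2*t + 2*r + 1"
      using t by (simp add: algebra_simps)
    also have "\<dots> = 4*n*Suc r + Suc r" using IH t by (simp add: algebra_simps)
    finally show ?case .
  qed
  have ev: "even (r * ((r+k) + 3*k + 1))"
    by (cases "even r") auto
  have "2 * (\<Sum>j<r. 2*(r+k) - j) + r*r = 4*(r+k)*r + r" using claim[of "r+k"] by simp
  moreover have "2 * ((r * ((r+k) + 3*k + 1)) div 2) = r * ((r+k) + 3*k + 1)" using ev by simp
  ultimately show ?thesis by (simp add: algebra_simps)
qed

lemma factor_real:
  fixes p m N j :: nat
  assumes p: "p \<ge> 1" and m: "m \<ge> 1" and jN: "j \<le> N"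
  shows "real ((p^m)^N - p^j * (p^(m-1))^N) = (real p ^ (m-1))^N * (real p ^ N - real p ^ j)"
proof -
  have pm: "p^m = p^(m-1) * p" using m by (simp add: power_eq_if)
  have e: "(p^m)^N = (p^(m-1))^N * p^N" unfolding pm by (simp add: power_mult_distrib)
  have le: "p^j \<le> p^N" using p jN by (simp add: power_increasing)
  have "p^j * (p^(m-1))^N \<le> (p^m)^N" unfolding e using le by (simp add: mult.commute)
  then have "real ((p^m)^N - p^j * (p^(m-1))^N) = real ((p^m)^N) - real (p^j * (p^(m-1))^N)"
    by (simp add: of_nat_diff)
  also have "\<dots> = (real p ^ (m-1))^N * (real p ^ N - real p ^ j)"
    unfolding e by (simp add: algebra_simps power_mult_distrib)
  finally show ?thesis .
qed

lemma per_alg: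
  fixes u w z :: real
  assumes "u - 1 \<noteq> 0"
  shows "(w - 1)/(u - 1) * (w + 1) * (z * u - z) = z * (w * w) - z"
  using assms by (simp add: field_simps)

lemma real_formula:
  fixes p m r k :: nat
  assumes p: "p \<ge> 2" and m: "m \<ge> 1"
  shows "real (\<Prod>j<r. (p^m)^(2*(r+k)-j) - p^j*(p^(m-1))^(2*(r+k)-j)) =
    (real p^(m-1))^((r*((r+k)+3*k+1)) div 2) * (\<Prod>j<r. (real p^((r+k)-j) - 1)/(real p^(r-j) - 1))
    * (\<Prod>j<r. (real p^((r+k)-j)+1)) * real (\<Prod>j<r. (p^m)^r - p^j*(p^(m-1))^r)"
proof -
  let ?x = "real p" and ?n = "r + k"
  let ?y = "?x ^ (m-1)"
  have x2: "?x \<ge> 2" using p by simp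
  have L: "real (\<Prod>j<r. (p^m)^(2*?n-j) - p^j*(p^(m-1))^(2*?n-j)) = (\<Prod>j<r. ?y^(2*?n-j) * (?x^(2*?n-j) - ?x^j))"
    unfolding of_nat_prod
  proof (rule prod.cong)
    fix j assume j: "j \<in> {..<r}"
    show "real ((p^m)^(2*?n-j) - p^j*(p^(m-1))^(2*?n-j)) = ?y^(2*?n-j) * (?x^(2*?n-j) - ?x^j)"
      by (rule factor_real) (use p m j in auto)
  qed simp
  have G: "real (\<Prod>j<r. (p^m)^r - p^j*(p^(m-1))^r) = (\<Prod>j<r. ?y^r * (?x^r - ?x^j))"
    unfolding of_nat_prod
  proof (rule prod.cong)
    fix j assume j: "j \<in> {..<r}"
    show "real ((p^m)^r - p^j*(p^(m-1))^r) = ?y^r * (?x^r - ?x^j)"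
      by (rule factor_real) (use p m j in auto)
  qed simp
  have per: "(?x^(?n-j) - 1)/(?x^(r-j) - 1) * (?x^(?n-j)+1) * (?x^r - ?x^j) = ?x^(2*?n-j) - ?x^j"
    if j: "j < r" for j
  proof -
    have ne: "?x^(r-j) - 1 \<noteq> 0"
    proof -
      have "?x^1 \<le> ?x^(r-j)" using j x2 by (intro power_increasing) auto
      then have "?x \<le> ?x^(r-j)" by (simp only: power_one_right)
      then show ?thesis using x2 by linarith
    qed
    have e1: "?x^r = ?x^j * ?x^(r-j)" using j by (simp add: power_add[symmetric])
    have ee: "2*?n - j = j + ((?n-j) + (?n-j))" using j by simp
    have e2: "?x^(2*?n-j) = ?x^j * (?x^(?n-j) * ?x^(?n-j))" unfolding ee by (simp only: power_add)
    show ?thesis unfolding e1 e2 by (rule per_alg[OF ne])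
  qed
  have "(\<Prod>j<r. ?y^(2*?n-j) * (?x^(2*?n-j) - ?x^j)) = ?y^(\<Sum>j<r. 2*?n-j) * (\<Prod>j<r. ?x^(2*?n-j) - ?x^j)"
    by (simp add: prod.distrib power_sum)
  also have "?y^(\<Sum>j<r. 2*?n-j) = ?y^((r*(?n+3*k+1)) div 2) * ?y^(r*r)"
    unfolding exp_identity by (rule power_add)
  also have "(\<Prod>j<r. ?x^(2*?n-j) - ?x^j) = (\<Prod>j<r. (?x^(?n-j) - 1)/(?x^(r-j) - 1) * (?x^(?n-j)+1) * (?x^r - ?x^j))"
  proof (rule prod.cong)
    fix j assume "j \<in> {..<r}"
    then show "?x^(2*?n-j) - ?x^j = (?x^(?n-j) - 1)/(?x^(r-j) - 1) * (?x^(?n-j)+1) * (?x^r - ?x^j)"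
      by (intro per[symmetric]) simp
  qed simp
  also have "\<dots> = (\<Prod>j<r. (?x^(?n-j) - 1)/(?x^(r-j) - 1)) * (\<Prod>j<r. ?x^(?n-j)+1) * (\<Prod>j<r. ?x^r - ?x^j)"
    by (simp only: prod.distrib)
  finally have "(\<Prod>j<r. ?y^(2*?n-j) * (?x^(2*?n-j) - ?x^j)) =
     ?y^((r*(?n+3*k+1)) div 2) * (\<Prod>j<r. (?x^(?n-j) - 1)/(?x^(r-j) - 1)) * (\<Prod>j<r. ?x^(?n-j)+1)
       * (?y^(r*r) * (\<Prod>j<r. ?x^r - ?x^j))" by (simp add: algebra_simps)
  moreover have "?y^(r*r) * (\<Prod>j<r. ?x^r - ?x^j) = (\<Prod>j<r. ?y^r * (?x^r - ?x^j))"
    by (simp add: prod.distrib power_mult)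
  ultimately show ?thesis unfolding L G by simp
qed


theorem lemma2:
  fixes p m n k :: nat
  assumes "prime p" and "m \<ge> 1" and "n \<ge> 1" and "k < n"
  shows "real (card (stab_codes (p ^ m) n k)) =
    (real p ^ (m - 1)) ^ (((n - k) * (n + 3 * k + 1)) div 2)
    * gauss_binom p n k * (\<Prod>j<n-k. (real p ^ (n - j) + 1))"
proof -
  define r where "r = n - k"
  have nr: "n = r + k" using assms(4) by (simp add: r_def)
  have r1: "r \<ge> 1" using assms(4) by (simp add: r_def)
  define P where "P = int p"
  have P: "prime P" using assms(1) by (simp add: P_def prime_nat_int_transfer)
  have m: "m > 0" using assms(2) by simp
  have D: "int (p^m) = P^m" by (simp add: P_def)
  have p2: "p \<ge> 2" using assms(1) by (rule prime_ge_2_nat)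
  have nP: "nat (P^e) = p^e" for e by (simp add: P_def nat_power_eq)
  have nP1: "nat P = p" by (simp add: P_def)
  have cc: "card (Tsym P (int (p^m)) n r) = card (stab_codes (p^m) n k) * card (Tgl P (int (p^m)) r r)"
    using codes_count[OF P m D, of n r] codes_eq[OF P m D, of n k] by (simp add: r_def)
  have T: "card (Tsym P (int (p^m)) n r) = (\<Prod>j<r. (p^m)^(2*n-j) - p^j * (p^(m-1))^(2*n-j))"
    using Tsym_card[OF P m, of r n] nr unfolding D nP nP1 by simp
  have G: "card (Tgl P (int (p^m)) r r) = (\<Prod>j<r. (p^m)^r - p^j * (p^(m-1))^r)"
    using Tgl_card[OF P m, of r r] unfolding D nP nP1 by simp
  have Gpos: "real (\<Prod>j<r. (p^m)^r - p^j * (p^(m-1))^r) > 0"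
    unfolding of_nat_prod
  proof (rule prod_pos)
    fix j assume j: "j \<in> {..<r}"
    have "real ((p^m)^r - p^j * (p^(m-1))^r) = (real p ^ (m-1))^r * (real p ^ r - real p ^ j)"
      by (rule factor_real) (use p2 assms(2) j in auto)
    moreover have "real p ^ j < real p ^ r" using p2 j by (intro power_strict_increasing) auto
    moreover have "(real p ^ (m-1))^r > 0" using p2 by simp
    ultimately show "real ((p^m)^r - p^j * (p^(m-1))^r) > 0" by simp
  qed
  have RF: "real (card (Tsym P (int (p^m)) n r)) =
    (real p^(m-1))^((r*((r+k)+3*k+1)) div 2) * (\<Prod>j<r. (real p^((r+k)-j) - 1)/(real p^(r-j) - 1))
    * (\<Prod>j<r. (real p^((r+k)-j)+1)) * real (card (Tgl P (int (p^m)) r r))"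
    unfolding T G using real_formula[OF p2 assms(2), of r k] nr by simp
  have gb: "gauss_binom p n k = (\<Prod>j<r. (real p^((r+k)-j) - 1)/(real p^(r-j) - 1))"
    unfolding gauss_binom_def r_def[symmetric] using nr by (simp add: r_def)
  have "real (card (stab_codes (p^m) n k)) * real (card (Tgl P (int (p^m)) r r)) =
     ((real p ^ (m - 1)) ^ (((n - k) * (n + 3 * k + 1)) div 2)
    * gauss_binom p n k * (\<Prod>j<n-k. (real p ^ (n - j) + 1))) * real (card (Tgl P (int (p^m)) r r))"
    using RF unfolding cc gb r_def[symmetric] of_nat_mult using nr by simp
  moreover have g0: "real (card (Tgl P (int (p^m)) r r)) \<noteq> 0" unfolding G using Gpos by linarith
  ultimately show ?thesis by (metis mult_right_cancel)
qed


end
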